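(* Let $m,n,M\ge 1$, $A\in\mathbb{R}^{m\times n}$, $\sigma>0$, $\tau>0$, and consider the linear measurement model $y=Ax+\epsilon$ with $x\in\mathbb{R}^n$ and $\epsilon\sim\mathcal{N}(0,\sigma^2 I_m)$ independent of $x$. Let the prior on $x$ be the isotropic Gaussian mixture $$\pi(x)=\sum_{j=1}^M w_j\,\varphi(x;\mu_j,\tau^2 I_n),\qquad \mu_j\in\mathbb{R}^n,\ w_j\ge 0,\ \sum_{j=1}^M w_j=1.$$ Fix an observation $y^\star\in\mathbb{R}^m$, let $\Sigma:=\sigma^2 I_m+\tau^2AA^\top$, and for each $j$ define the score $$s_j(y^\star):=\tfrac12\big\|\Sigma^{-1/2}(y^\star-A\mu_j)\big\|_2^2 .$$ Let $s_{(1)}(y^\star)\le s_{(2)}(y^\star)$ be the smallest and second-smallest of the scores, and let $\delta(y^\star):=\frac1m\big(s_{(2)}(y^\star)-s_{(1)}(y^\star)\big)$. Assume: (1) there is $C>1$ with $1/C\le w_i/w_j\le C$ for all $i,j$; (2) there is a unique minimizer $j^\star=\arg\min_j s_j(y^\star)$, and $\delta(y^\star)\ge\delta_0$ for a constant $\delta_0>0$. Let $\tilde w_j:=w_j\,\varphi(y^\star;A\mu_j,\Sigma)$ and let $J$ be a random variable on $\{1,\dots,M\}$ with $\mathbb{P}(J=j)=\tilde w_j/\sum_{i=1}^M\tilde w_i$. Then (i) $\mathbb{P}(J\ne j^\star)\le CM\exp(-\delta_0 m)$; (ii) the posterior $\pi(\cdot\mid y^\star)$ of $x$ given $y=y^\star$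 satisfies $$\big\|\pi(\cdot\mid y^\star)-\mathcal{N}(m_{j^\star}(y^\star),\Sigma_{\mathrm{post}})\big\|_{\mathsf{TV}}\le CM\exp(-\delta_0 m),$$ where $m_{j^\star}(y^\star)=\mu_{j^\star}+\tau^2A^\top\Sigma^{-1}(y^\star-A\mu_{j^\star})$ and $\Sigma_{\mathrm{post}}=\tau^2 I_n-\tau^4A^\top\Sigma^{-1}A$.
   Context: $\varphi(\cdot;\mu,\Sigma)$ denotes the density of the Gaussian $\mathcal{N}(\mu,\Sigma)$. $\|\cdot\|_{\mathsf{TV}}$ is the total variation distance between probability measures. The posterior $\pi(\cdot\mid y^\star)$ is the Bayesian posterior of $x$ under the stated prior and likelihood $y\mid x\sim\mathcal{N}(Ax,\sigma^2I_m)$. *)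

theory Defs
  imports "HOL-Probability.Probability"
begin

definition gauss_density :: "real^'k \<Rightarrow> real^'k^'k \<Rightarrow> real^'k \<Rightarrow> real" where
  "gauss_density mu S x =
     exp (- ((x - mu) \<bullet> (matrix_inv S *v (x - mu))) / 2)
     / sqrt ((2 * pi) ^ CARD('k) * det S)"

definition gauss_measure :: "real^'k \<Rightarrow> real^'k^'k \<Rightarrow> (real^'k) measure" where
  "gauss_measure mu S = density lborel (\<lambda>x. ennreal (gauss_density mu S x))"

definition psd_sqrt :: "real^'k^'k \<Rightarrow> real^'k^'k" where
  "psd_sqrt S = (THE R. transpose R = R \<and> (\<forall>x. 0 \<le> x \<bullet> (R *v x)) \<and> R ** R = S)"

definition tv_dist :: "'a measure \<Rightarrow> 'a measure \<Rightarrow> real" where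
  "tv_dist P Q = (SUP B \<in> sets P. \<bar>measure P B - measure Q B\<bar>)"

definition gm_prior :: "nat \<Rightarrow> (nat \<Rightarrow> real) \<Rightarrow> (nat \<Rightarrow> real^'n) \<Rightarrow> real \<Rightarrow> real^'n \<Rightarrow> real" where
  "gm_prior M w mu \<tau> x = (\<Sum>j<M. w j * gauss_density (mu j) (\<tau>\<^sup>2 *\<^sub>R mat 1) x)"

definition posterior :: "(real^'n \<Rightarrow> real) \<Rightarrow> real^'n^'m \<Rightarrow> real \<Rightarrow> real^'m \<Rightarrow> (real^'n) measure" where
  "posterior p A \<sigma> ystar =
     (let L = (\<lambda>x. p x * gauss_density (A *v x) (\<sigma>\<^sup>2 *\<^sub>R mat 1) ystar);
          Z = (\<integral>x. L x \<partial>lborel)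
      in density lborel (\<lambda>x. ennreal (L x / Z)))"

end

theory Submission
  imports Defs
begin

lemma matrix_inv_props:
  fixes A :: "real^'k^'k"
  assumes "invertible A"
  shows "A ** matrix_inv A = mat 1" "matrix_inv A ** A = mat 1"
proof -
  have "\<exists>A'. A ** A' = mat 1 \<and> A' ** A = mat 1" using assms unfolding invertible_def by blast
  from someI_ex[OF this] show "A ** matrix_inv A = mat 1" "matrix_inv A ** A = mat 1"
    unfolding matrix_inv_def by auto
qed

lemma matrix_inv_eq:
  fixes A B :: "real^'k^'k"
  assumes "A ** B = mat 1"
  shows "matrix_inv A = B"
proof -
  have inv: "invertible A" using assms invertible_right_inverse by blast
  have "matrix_inv A = matrix_inv A ** (A ** B)" using assms by simp
  also have "\<dots> = (matrix_inv A ** A) ** B" by (simp add: matrix_mul_assoc)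
  also have "\<dots> = B" using matrix_inv_props(2)[OF inv] by simp
  finally show ?thesis .
qed

lemma inner_mv_transpose:
  fixes A :: "real^'a^'b"
  shows "(A *v x) \<bullet> y = x \<bullet> (transpose A *v y)"
proof -
  have "(A *v x) \<bullet> y = (\<Sum>i\<in>UNIV. \<Sum>j\<in>UNIV. A$i$j * x$j * y$i)"
    by (simp add: inner_vec_def matrix_vector_mult_def sum_distrib_right)
  also have "\<dots> = (\<Sum>j\<in>UNIV. \<Sum>i\<in>UNIV. A$i$j * x$j * y$i)" by (rule sum.swap)
  also have "\<dots> = x \<bullet> (transpose A *v y)"
    by (simp add: inner_vec_def matrix_vector_mult_def transpose_def sum_distrib_left mult_ac)
  finally show ?thesis .
qed

lemma inner_mv_sym:
  fixes A :: "real^'a^'a"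
  assumes "transpose A = A"
  shows "(A *v x) \<bullet> y = x \<bullet> (A *v y)"
  using inner_mv_transpose[of A x y] assms by simp

lemma real_lin_quad_zero:
  fixes q X :: real
  assumes "\<And>t. 0 \<le> 2*t*q + t^2*X"
  shows "q = 0"
proof -
  define K where "K = \<bar>X\<bar> + 1"
  have K: "K > 0" "X - 2*K < 0" unfolding K_def by auto
  have "0 \<le> 2*(-q/K)*q + (-q/K)^2*X" by (rule assms)
  hence "0 \<le> (2*(-q/K)*q + (-q/K)^2*X) * K^2" using K by simp
  also have "\<dots> = q^2 * (X - 2*K)" using K by (simp add: field_simps power2_eq_square)
  finally have "q^2 * (X - 2*K) \<ge> 0" .
  hence "q^2 \<le> 0" using K by (simp add: mult_le_0_iff zero_le_mult_iff)
  thus ?thesis by simp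
qed

lemma mv_lin: fixes A :: "real^'a^'b"
  shows "A *v (x + t *\<^sub>R y) = A *v x + t *\<^sub>R (A *v y)"
  by (simp add: matrix_vector_right_distrib matrix_vector_mult_scaleR)

lemma eigen_of_max:
  fixes A :: "real^'k^'k"
  assumes sym: "transpose A = A" and V: "subspace V" and inv: "\<forall>x\<in>V. A *v x \<in> V"
    and u: "u \<in> V" "norm u = 1"
    and mx: "\<forall>y\<in>V. norm y = 1 \<longrightarrow> y \<bullet> (A *v y) \<le> u \<bullet> (A *v u)"
  shows "A *v u = (u \<bullet> (A *v u)) *\<^sub>R u"
proof -
  define l where "l = u \<bullet> (A *v u)"
  have hom: "y \<bullet> (A *v y) \<le> l * (norm y)^2" if "y \<in> V" for y
  proof (cases "y = 0")
    case True thus ?thesis by simp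
  next
    case False
    let ?z = "(1 / norm y) *\<^sub>R y"
    have "?z \<in> V" using that V by (simp add: subspace_scale)
    moreover have "norm ?z = 1" using False by simp
    ultimately have "?z \<bullet> (A *v ?z) \<le> l" using mx l_def by blast
    moreover have "?z \<bullet> (A *v ?z) = (y \<bullet> (A *v y)) / (norm y)^2"
      by (simp add: matrix_vector_mult_scaleR power2_eq_square)
    ultimately have "(y \<bullet> (A *v y)) / (norm y)^2 \<le> l" by linarith
    thus ?thesis using False by (simp add: divide_le_eq mult.commute)
  qed
  have symi: "a \<bullet> (A *v b) = b \<bullet> (A *v a)" for a b
    using inner_mv_sym[OF sym, of a b] by (simp add: inner_commute)
  have orth: "v \<bullet> (A *v u) = 0" if v: "v \<in> V" "v \<bullet> u = 0" for v
  proof -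
    have "- (v \<bullet> (A *v u)) = 0"
    proof (rule real_lin_quad_zero[where X = "l * (norm v)^2 - v \<bullet> (A *v v)"])
      fix t :: real
      have w: "u + t *\<^sub>R v \<in> V" using u v V by (simp add: subspace_add subspace_scale)
      have "(u + t *\<^sub>R v) \<bullet> (A *v (u + t *\<^sub>R v)) = l + 2*t*(v \<bullet> (A *v u)) + t^2 * (v \<bullet> (A *v v))"
        unfolding mv_lin using symi[of u v]
        by (simp add: inner_add_left inner_add_right l_def power2_eq_square algebra_simps)
      moreover have "(norm (u + t *\<^sub>R v))^2 = 1 + t^2 * (norm v)^2"
      proof -
        have uu: "u \<bullet> u = 1" using u(2) by (metis norm_eq_sqrt_inner real_sqrt_eq_1_iff)
        have "(norm (u + t *\<^sub>R v))^2 = (u + t *\<^sub>R v) \<bullet> (u + t *\<^sub>R v)" by (simp add: power2_norm_eq_inner)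
        also have "\<dots> = u \<bullet> u + 2 * t * (u \<bullet> v) + t^2 * (v \<bullet> v)"
          by (simp add: inner_add_left inner_add_right inner_commute power2_eq_square)
        finally show ?thesis using uu v by (simp add: inner_commute power2_norm_eq_inner)
      qed
      ultimately show "0 \<le> 2*t*(- (v \<bullet> (A *v u))) + t^2 * (l * (norm v)^2 - v \<bullet> (A *v v))"
        using hom[OF w] by (simp add: algebra_simps)
    qed
    thus ?thesis by simp
  qed
  define w where "w = A *v u - l *\<^sub>R u"
  have wV: "w \<in> V" unfolding w_def using u inv V by (simp add: subspace_diff subspace_scale)
  have uu: "u \<bullet> u = 1" using u(2) by (metis norm_eq_sqrt_inner real_sqrt_eq_1_iff)
  have "w \<bullet> u = 0" unfolding w_def l_def using uu
    by (simp add: inner_diff_left inner_diff_right inner_commute)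
  hence "w \<bullet> (A *v u) = 0" using orth wV by blast
  hence "w \<bullet> w = 0" using \<open>w \<bullet> u = 0\<close> unfolding w_def[of] by (simp add: inner_diff_right)
  hence "w = 0" by simp
  thus ?thesis unfolding w_def l_def by simp
qed

lemma spectral_subspace:
  fixes A :: "real^'k^'k"
  assumes sym: "transpose A = A"
  shows "subspace V \<Longrightarrow> (\<forall>x\<in>V. A *v x \<in> V) \<Longrightarrow>
    \<exists>B. B \<subseteq> V \<and> span B = V \<and> pairwise orthogonal B \<and> (\<forall>b\<in>B. norm b = 1 \<and> (\<exists>c. A *v b = c *\<^sub>R b))"
proof (induction "dim V" arbitrary: V rule: less_induct)
  case less
  show ?case
  proof (cases "V = {0}")
    case True
    thus ?thesis by (intro exI[of _ "{}"]) auto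
  next
    case False
    then obtain v where v: "v \<in> V" "v \<noteq> 0" using less.prems(1) subspace_0 by blast
    define S where "S = V \<inter> sphere 0 1"
    have "compact S" unfolding S_def using less.prems(1)
      by (metis closed_subspace compact_Int_closed compact_sphere Int_commute)
    moreover have "S \<noteq> {}"
    proof -
      have "(1 / norm v) *\<^sub>R v \<in> S" using v less.prems(1) by (simp add: S_def subspace_scale)
      thus ?thesis by blast
    qed
    moreover have "continuous_on S (\<lambda>y. y \<bullet> (A *v y))"
    proof -
      have "bounded_linear ((*v) A)" by (rule matrix_vector_mul_bounded_linear)
      hence "continuous_on S ((*v) A)" by (rule linear_continuous_on)
      thus ?thesis by (intro continuous_on_inner continuous_on_id)
    qed
    ultimately obtain u where u: "u \<in> S" and mx: "\<forall>y\<in>S. y \<bullet> (A *v y) \<le> u \<bullet> (A *v u)"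
      using continuous_attains_sup by blast
    have uV: "u \<in> V" and un: "norm u = 1" using u by (auto simp: S_def)
    have eig: "A *v u = (u \<bullet> (A *v u)) *\<^sub>R u"
      by (rule eigen_of_max[OF sym less.prems(1) less.prems(2) uV un]) (use mx in \<open>auto simp: S_def\<close>)
    define W where "W = {x \<in> V. x \<bullet> u = 0}"
    have subW: "subspace W" unfolding W_def using less.prems(1)
      by (auto simp: subspace_def inner_add_left)
    have invW: "\<forall>x\<in>W. A *v x \<in> W"
    proof
      fix x assume x: "x \<in> W"
      have "(A *v x) \<bullet> u = x \<bullet> (A *v u)" using inner_mv_sym[OF sym] by simp
      also have "\<dots> = (u \<bullet> (A *v u)) * (x \<bullet> u)" by (subst eig) simp
      also have "\<dots> = 0" using x by (simp add: W_def)
      finally show "A *v x \<in> W" using x less.prems(2) by (auto simp: W_def)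
    qed
    have uu: "u \<bullet> u = 1" using un by (metis norm_eq_sqrt_inner real_sqrt_eq_1_iff)
    have "W \<subseteq> V" by (auto simp: W_def)
    moreover have "u \<in> V - W" using uV uu by (simp add: W_def)
    ultimately have "W \<subset> V" by blast
    moreover have "span W = W" using subW by simp
    moreover have "span V = V" using less.prems(1) by simp
    ultimately have "span W \<subset> span V" by metis
    hence "dim W < dim V" by (rule dim_psubset)
    from less.hyps[OF this subW invW] obtain B where
      B: "B \<subseteq> W" "span B = W" "pairwise orthogonal B" "\<forall>b\<in>B. norm b = 1 \<and> (\<exists>c. A *v b = c *\<^sub>R b)"
      by blast
    show ?thesis
    proof (intro exI[of _ "insert u B"] conjI)
      show "insert u B \<subseteq> V" using B(1) uV by (auto simp: W_def)
      show "span (insert u B) = V"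
      proof (rule span_subspace)
        show "insert u B \<subseteq> V" using B(1) uV by (auto simp: W_def)
        show "V \<subseteq> span (insert u B)"
        proof
          fix x assume x: "x \<in> V"
          have "x - (x \<bullet> u) *\<^sub>R u \<in> W" using x uV uu less.prems(1)
            by (auto simp: W_def inner_diff_left subspace_diff subspace_scale)
          hence "x - (x \<bullet> u) *\<^sub>R u \<in> span (insert u B)" using B(2) by (metis span_mono subset_insertI subsetD)
          moreover have "(x \<bullet> u) *\<^sub>R u \<in> span (insert u B)" by (simp add: span_base span_scale)
          ultimately have "x - (x \<bullet> u) *\<^sub>R u + (x \<bullet> u) *\<^sub>R u \<in> span (insert u B)" by (rule span_add)
          thus "x \<in> span (insert u B)" by simp
        qed
        show "subspace V" by (rule less.prems(1))
      qed
      show "pairwise orthogonal (insert u B)"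
        using B(1,3) by (auto simp: pairwise_insert W_def orthogonal_def inner_commute)
      show "\<forall>b\<in>insert u B. norm b = 1 \<and> (\<exists>c. A *v b = c *\<^sub>R b)"
        using B(4) un eig by blast
    qed
  qed
qed

lemma spectral:
  fixes A :: "real^'k^'k"
  assumes sym: "transpose A = A"
  obtains B where "finite B" "span B = UNIV" "pairwise orthogonal B" "\<And>b. b \<in> B \<Longrightarrow> norm b = 1"
    "\<And>b. b \<in> B \<Longrightarrow> A *v b = (b \<bullet> (A *v b)) *\<^sub>R b"
proof -
  obtain B where B: "span B = UNIV" "pairwise orthogonal B" "\<forall>b\<in>B. norm b = 1 \<and> (\<exists>c. A *v b = c *\<^sub>R b)"
    using spectral_subspace[OF sym, of UNIV] by auto
  have "0 \<notin> B" using B(3) by force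
  hence "independent B" using B(2) pairwise_orthogonal_independent by blast
  hence fin: "finite B" using independent_imp_finite by blast
  have "A *v b = (b \<bullet> (A *v b)) *\<^sub>R b" if b: "b \<in> B" for b
  proof -
    obtain c where c: "A *v b = c *\<^sub>R b" using B(3) b by blast
    have "b \<bullet> b = 1" using B(3) b by (metis norm_eq_sqrt_inner real_sqrt_eq_1_iff)
    hence "b \<bullet> (A *v b) = c" using c by simp
    thus ?thesis using c by simp
  qed
  thus ?thesis using that fin B by blast
qed

lemma orthonormal_expand:
  fixes x :: "'a::euclidean_space"
  assumes fin: "finite B" and sp: "span B = UNIV" and po: "pairwise orthogonal B"
    and nb: "\<And>b. b \<in> B \<Longrightarrow> norm b = 1"
  shows "x = (\<Sum>b\<in>B. (b \<bullet> x) *\<^sub>R b)"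
proof -
  have bb: "b \<bullet> b' = (if b = b' then 1 else 0)" if "b \<in> B" "b' \<in> B" for b b'
    using po nb that by (auto simp: pairwise_def orthogonal_def norm_eq_sqrt_inner)
  define y where "y = x - (\<Sum>b\<in>B. (b \<bullet> x) *\<^sub>R b)"
  have "b \<bullet> y = 0" if "b \<in> B" for b
  proof -
    have "b \<bullet> (\<Sum>b'\<in>B. (b' \<bullet> x) *\<^sub>R b') = (\<Sum>b'\<in>B. (b' \<bullet> x) * (b \<bullet> b'))"
      by (simp add: inner_sum_right)
    also have "\<dots> = (\<Sum>b'\<in>B. if b' = b then b \<bullet> x else 0)"
      by (rule sum.cong) (use bb that in auto)
    also have "\<dots> = b \<bullet> x" using fin that by simp
    finally show ?thesis by (simp add: y_def inner_diff_right)
  qed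
  hence "orthogonal y a" if "a \<in> span B" for a
    using orthogonal_to_span[OF that, of y] by (simp add: orthogonal_def inner_commute)
  hence "orthogonal y y" using sp by blast
  hence "y = 0" by (simp add: orthogonal_def)
  thus ?thesis by (simp add: y_def)
qed


lemma psd_null:
  fixes R :: "real^'k^'k"
  assumes sym: "transpose R = R" and psd: "\<forall>x. 0 \<le> x \<bullet> (R *v x)" and x0: "x \<bullet> (R *v x) = 0"
  shows "R *v x = 0"
proof -
  have symi: "a \<bullet> (R *v b) = b \<bullet> (R *v a)" for a b
    using inner_mv_sym[OF sym, of a b] by (simp add: inner_commute)
  have "y \<bullet> (R *v x) = 0" for y
  proof (rule real_lin_quad_zero[where X = "y \<bullet> (R *v y)"])
    fix t :: real
    have "0 \<le> (x + t *\<^sub>R y) \<bullet> (R *v (x + t *\<^sub>R y))" using psd by blast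
    also have "\<dots> = x \<bullet> (R *v x) + 2*t*(y \<bullet> (R *v x)) + t^2 * (y \<bullet> (R *v y))"
      unfolding mv_lin using symi[of x y]
      by (simp add: inner_add_left inner_add_right power2_eq_square algebra_simps)
    finally show "0 \<le> 2*t*(y \<bullet> (R *v x)) + t^2 * (y \<bullet> (R *v y))" using x0 by simp
  qed
  from this[of "R *v x"] show ?thesis by simp
qed

lemma mv_sum_scale:
  fixes S :: "real^'k^'k"
  shows "S *v (\<Sum>b\<in>B. f b *\<^sub>R g b) = (\<Sum>b\<in>B. f b *\<^sub>R (S *v g b))"
proof -
  have "linear ((*v) S)" by (rule matrix_vector_mul_linear)
  thus ?thesis by (simp add: linear_sum linear_scale)
qed

lemma psd_sqrt_unique:
  fixes R1 R2 :: "real^'k^'k"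
  assumes s1: "transpose R1 = R1" and p1: "\<forall>x. 0 \<le> x \<bullet> (R1 *v x)"
    and s2: "transpose R2 = R2" and p2: "\<forall>x. 0 \<le> x \<bullet> (R2 *v x)"
    and eq: "R1 ** R1 = R2 ** R2"
  shows "R1 = R2"
proof -
  define D where "D = R1 - R2"
  have sD: "transpose D = D" using s1 s2 by (simp add: D_def transpose_def vec_eq_iff)
  obtain B where B: "finite B" "span B = UNIV" "pairwise orthogonal B" "\<And>b. b \<in> B \<Longrightarrow> norm b = 1"
    "\<And>b. b \<in> B \<Longrightarrow> D *v b = (b \<bullet> (D *v b)) *\<^sub>R b"
    using spectral[OF sD] by blast
  have Db: "D *v b = 0" if b: "b \<in> B" for b
  proof -
    define l where "l = b \<bullet> (D *v b)"
    have e: "D *v b = l *\<^sub>R b" using B(5)[OF b] l_def by simp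
    have bb: "b \<bullet> b = 1" using B(4)[OF b] by (metis norm_eq_sqrt_inner real_sqrt_eq_1_iff)
    have "R1 *v (D *v b) + D *v (R2 *v b) = 0"
    proof -
      have "R1 *v (D *v b) + D *v (R2 *v b) = (R1 ** R1) *v b - (R2 ** R2) *v b"
        by (simp add: D_def matrix_vector_mult_diff_rdistrib matrix_vector_mult_diff_distrib matrix_vector_mul_assoc[symmetric])
      thus ?thesis using eq by simp
    qed
    hence "b \<bullet> (R1 *v (D *v b)) + b \<bullet> (D *v (R2 *v b)) = 0" by (metis inner_add_right inner_zero_right)
    moreover have "b \<bullet> (D *v (R2 *v b)) = (D *v b) \<bullet> (R2 *v b)"
      using inner_mv_sym[OF sD, of b "R2 *v b"] by (simp add: inner_commute)
    ultimately have "l * (b \<bullet> (R1 *v b) + b \<bullet> (R2 *v b)) = 0"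
      using e by (simp add: matrix_vector_mult_scaleR algebra_simps inner_commute)
    moreover have "l = 0"
    proof (rule ccontr)
      assume "l \<noteq> 0"
      with calculation have "b \<bullet> (R1 *v b) + b \<bullet> (R2 *v b) = 0" by simp
      hence "b \<bullet> (R1 *v b) = 0" "b \<bullet> (R2 *v b) = 0" using p1 p2 by (smt (verit))+
      hence "R1 *v b = 0" "R2 *v b = 0" using psd_null s1 p1 s2 p2 by blast+
      hence "D *v b = 0" by (simp add: D_def matrix_vector_mult_diff_rdistrib)
      hence "l *\<^sub>R b = 0" using e by simp
      thus False using \<open>l \<noteq> 0\<close> bb by auto
    qed
    thus ?thesis using e by simp
  qed
  have "D *v x = 0 *v x" for x
  proof -
    have "D *v x = D *v (\<Sum>b\<in>B. (b \<bullet> x) *\<^sub>R b)" using orthonormal_expand[OF B(1-4)] by metis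
    also have "\<dots> = 0" unfolding mv_sum_scale using Db by simp
    finally show ?thesis by simp
  qed
  hence "D = 0" by (simp add: matrix_eq)
  thus ?thesis by (simp add: D_def)
qed

lemma psd_sqrt_exists:
  fixes S :: "real^'k^'k"
  assumes sym: "transpose S = S" and psd: "\<forall>x. 0 \<le> x \<bullet> (S *v x)"
  shows "\<exists>R. transpose R = R \<and> (\<forall>x. 0 \<le> x \<bullet> (R *v x)) \<and> R ** R = S"
proof -
  obtain B where B: "finite B" "span B = UNIV" "pairwise orthogonal B" "\<And>b. b \<in> B \<Longrightarrow> norm b = 1"
    "\<And>b. b \<in> B \<Longrightarrow> S *v b = (b \<bullet> (S *v b)) *\<^sub>R b"
    using spectral[OF sym] by blast
  define l where "l b = sqrt (b \<bullet> (S *v b))" for b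
  have l2: "l b * l b = b \<bullet> (S *v b)" for b unfolding l_def using psd by simp
  have bb: "b \<bullet> b' = (if b = b' then 1 else 0)" if "b \<in> B" "b' \<in> B" for b b'
    using B(3,4) that by (auto simp: pairwise_def orthogonal_def norm_eq_sqrt_inner)
  define R :: "real^'k^'k" where "R = (\<chi> i j. \<Sum>b\<in>B. l b * b$i * b$j)"
  have Rv: "R *v x = (\<Sum>b\<in>B. (l b * (b \<bullet> x)) *\<^sub>R b)" for x
  proof -
    have "(R *v x)$i = (\<Sum>b\<in>B. (l b * (b \<bullet> x)) * b$i)" for i
    proof -
      have "(R *v x)$i = (\<Sum>j\<in>UNIV. \<Sum>b\<in>B. l b * b$i * b$j * x$j)"
        by (simp add: R_def matrix_vector_mult_def sum_distrib_right)
      also have "\<dots> = (\<Sum>b\<in>B. \<Sum>j\<in>UNIV. l b * b$i * b$j * x$j)" by (rule sum.swap)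
      also have "\<dots> = (\<Sum>b\<in>B. (l b * (b \<bullet> x)) * b$i)"
        by (simp add: inner_vec_def sum_distrib_left mult_ac)
      finally show ?thesis .
    qed
    thus ?thesis by (simp add: vec_eq_iff sum_component)
  qed
  have symR: "transpose R = R" by (simp add: R_def transpose_def vec_eq_iff mult_ac)
  have psdR: "0 \<le> x \<bullet> (R *v x)" for x
  proof -
    have "x \<bullet> (R *v x) = (\<Sum>b\<in>B. l b * (b \<bullet> x)^2)"
      by (simp add: Rv inner_sum_right power2_eq_square inner_commute mult_ac)
    also have "\<dots> \<ge> 0" using psd by (intro sum_nonneg) (simp add: l_def)
    finally show ?thesis .
  qed
  have "(R ** R) *v x = S *v x" for x
  proof -
    have bR: "b \<bullet> (R *v x) = l b * (b \<bullet> x)" if b: "b \<in> B" for b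
    proof -
      have "b \<bullet> (R *v x) = (\<Sum>b'\<in>B. (l b' * (b' \<bullet> x)) * (b \<bullet> b'))" by (simp add: Rv inner_sum_right)
      also have "\<dots> = (\<Sum>b'\<in>B. if b' = b then l b * (b \<bullet> x) else 0)"
        by (rule sum.cong) (use bb b in auto)
      also have "\<dots> = l b * (b \<bullet> x)" using B(1) b by simp
      finally show ?thesis .
    qed
    have "(R ** R) *v x = R *v (R *v x)" by (simp add: matrix_vector_mul_assoc)
    also have "\<dots> = (\<Sum>b\<in>B. (l b * (b \<bullet> (R *v x))) *\<^sub>R b)" by (rule Rv)
    also have "\<dots> = (\<Sum>b\<in>B. (b \<bullet> x) *\<^sub>R (S *v b))"
    proof (rule sum.cong)
      fix b assume b: "b \<in> B"
      have "(l b * (b \<bullet> (R *v x))) *\<^sub>R b = ((b \<bullet> x) * (l b * l b)) *\<^sub>R b" using bR[OF b] by (simp add: mult_ac)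
      also have "\<dots> = (b \<bullet> x) *\<^sub>R (S *v b)" using B(5)[OF b] l2[of b] by (metis scaleR_scaleR)
      finally show "(l b * (b \<bullet> (R *v x))) *\<^sub>R b = (b \<bullet> x) *\<^sub>R (S *v b)" .
    qed simp
    also have "\<dots> = S *v (\<Sum>b\<in>B. (b \<bullet> x) *\<^sub>R b)" by (simp add: mv_sum_scale)
    also have "\<dots> = S *v x" using orthonormal_expand[OF B(1-4), of x] by simp
    finally show ?thesis .
  qed
  hence "R ** R = S" by (simp add: matrix_eq)
  thus ?thesis using symR psdR by blast
qed

lemma psd_sqrt_char:
  fixes S :: "real^'k^'k"
  assumes sym: "transpose S = S" and psd: "\<forall>x. 0 \<le> x \<bullet> (S *v x)"
  shows "transpose (psd_sqrt S) = psd_sqrt S \<and> psd_sqrt S ** psd_sqrt S = S"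
proof -
  obtain R where R: "transpose R = R" "\<forall>x. 0 \<le> x \<bullet> (R *v x)" "R ** R = S"
    using psd_sqrt_exists[OF sym psd] by blast
  have "psd_sqrt S = R" unfolding psd_sqrt_def
  proof (rule the_equality)
    show "transpose R = R \<and> (\<forall>x. 0 \<le> x \<bullet> (R *v x)) \<and> R ** R = S" using R by blast
    fix R' assume "transpose R' = R' \<and> (\<forall>x. 0 \<le> x \<bullet> (R' *v x)) \<and> R' ** R' = S"
    thus "R' = R" using psd_sqrt_unique[of R' R] R by auto
  qed
  thus ?thesis using R by simp
qed

lemma nn_integral_real_shift:
  fixes h :: "real \<Rightarrow> ennreal"
  assumes [measurable]: "h \<in> borel_measurable borel"
  shows "(\<integral>\<^sup>+y. h (y + c) \<partial>lborel) = (\<integral>\<^sup>+y. h y \<partial>lborel)"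
proof -
  have "(\<integral>\<^sup>+y. h y \<partial>lborel) = (\<integral>\<^sup>+y. h y \<partial>(distr lborel borel ((+) c)))"
    by (simp add: lborel_distr_plus)
  also have "\<dots> = (\<integral>\<^sup>+y. h (c + y) \<partial>lborel)" by (subst nn_integral_distr) auto
  finally show ?thesis by (simp add: add.commute)
qed

lemma shear_decomp:
  fixes g :: "real^'k \<Rightarrow> ennreal" and a :: "real^'k"
  assumes g[measurable]: "g \<in> borel_measurable borel" and ai: "a $ i = 0"
  defines "b0 \<equiv> axis i (1::real)"
  defines "I \<equiv> (Basis :: (real^'k) set) - {b0}"
  shows "(\<integral>\<^sup>+x. g (x + (a \<bullet> x) *\<^sub>R b0) \<partial>lborel) =
     (\<integral>\<^sup>+x. (\<integral>\<^sup>+y. g ((\<Sum>b\<in>I. x b *\<^sub>R b) + y *\<^sub>R b0) \<partial>lborel) \<partial>(Pi\<^sub>M I (\<lambda>_. lborel)))"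
proof -
  interpret product_sigma_finite "\<lambda>_. lborel" by standard
  have b0B: "b0 \<in> Basis" by (simp add: b0_def)
  have BI: "(Basis :: (real^'k) set) = insert b0 I" using b0B by (auto simp: I_def)
  have finI: "finite I" "b0 \<notin> I" by (auto simp: I_def)
  define T where "T x = x + (a \<bullet> x) *\<^sub>R b0" for x :: "real^'k"
  have [measurable]: "T \<in> borel_measurable borel" unfolding T_def by measurable
  have "(\<integral>\<^sup>+x. g (T x) \<partial>lborel) = (\<integral>\<^sup>+f. g (T (\<Sum>b\<in>Basis. f b *\<^sub>R b)) \<partial>(Pi\<^sub>M Basis (\<lambda>_. lborel)))"
    by (subst lborel_eq) (simp add: nn_integral_distr)
  also have "\<dots> = (\<integral>\<^sup>+f. g (T (\<Sum>b\<in>Basis. f b *\<^sub>R b)) \<partial>(Pi\<^sub>M (insert b0 I) (\<lambda>_. lborel)))"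
    by (simp add: BI)
  also have "\<dots> = (\<integral>\<^sup>+x. (\<integral>\<^sup>+y. g (T (\<Sum>b\<in>Basis. (x(b0 := y)) b *\<^sub>R b)) \<partial>lborel) \<partial>(Pi\<^sub>M I (\<lambda>_. lborel)))"
    by (rule product_nn_integral_insert[OF finI]) (simp add: BI[symmetric])
  also have "\<dots> = (\<integral>\<^sup>+x. (\<integral>\<^sup>+y. g ((\<Sum>b\<in>I. x b *\<^sub>R b) + y *\<^sub>R b0) \<partial>lborel) \<partial>(Pi\<^sub>M I (\<lambda>_. lborel)))"
  proof (rule nn_integral_cong)
    fix x :: "real^'k \<Rightarrow> real" assume x: "x \<in> space (Pi\<^sub>M I (\<lambda>_. lborel))"
    define v where "v = (\<Sum>b\<in>I. x b *\<^sub>R b)"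
    have sum_eq: "(\<Sum>b\<in>Basis. (x(b0 := y)) b *\<^sub>R b) = y *\<^sub>R b0 + v" for y
    proof -
      have "(\<Sum>b\<in>insert b0 I. (x(b0 := y)) b *\<^sub>R b) = y *\<^sub>R b0 + (\<Sum>b\<in>I. (x(b0 := y)) b *\<^sub>R b)"
        using finI by (simp add: sum.insert)
      also have "(\<Sum>b\<in>I. (x(b0 := y)) b *\<^sub>R b) = v" unfolding v_def
        by (rule sum.cong) (use finI in auto)
      finally show ?thesis by (simp add: BI)
    qed
    have ab0: "a \<bullet> b0 = 0" using ai by (simp add: b0_def inner_axis)
    have Tv: "T (y *\<^sub>R b0 + v) = v + (y + a \<bullet> v) *\<^sub>R b0" for y
      by (simp add: T_def inner_add_right ab0 algebra_simps scaleR_add_left)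
    hence "(\<integral>\<^sup>+y. g (T (\<Sum>b\<in>Basis. (x(b0 := y)) b *\<^sub>R b)) \<partial>lborel) = (\<integral>\<^sup>+y. g (v + (y + a \<bullet> v) *\<^sub>R b0) \<partial>lborel)"
      by (simp only: sum_eq Tv)
    also have "\<dots> = (\<integral>\<^sup>+y. g (v + y *\<^sub>R b0) \<partial>lborel)"
      by (rule nn_integral_real_shift[where h = "\<lambda>y. g (v + y *\<^sub>R b0)"]) measurable
    finally show "(\<integral>\<^sup>+y. g (T (\<Sum>b\<in>Basis. (x(b0 := y)) b *\<^sub>R b)) \<partial>lborel) =
        (\<integral>\<^sup>+y. g ((\<Sum>b\<in>I. x b *\<^sub>R b) + y *\<^sub>R b0) \<partial>lborel)" by (simp add: v_def)
  qed
  finally show ?thesis by (simp add: T_def)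
qed

lemma shear_invariant:
  fixes g :: "real^'k \<Rightarrow> ennreal" and a :: "real^'k"
  assumes g: "g \<in> borel_measurable borel" and ai: "a $ i = 0"
  shows "(\<integral>\<^sup>+x. g (x + (a \<bullet> x) *\<^sub>R axis i 1) \<partial>lborel) = (\<integral>\<^sup>+x. g x \<partial>lborel)"
  using shear_decomp[OF g ai] shear_decomp[OF g, of 0 i] by simp


lemma gauss1d:
  fixes d :: real assumes d: "d > 0"
  shows "(\<integral>\<^sup>+t. ennreal (exp (- (d * t^2) / 2)) \<partial>lborel) = ennreal (sqrt (2 * pi / d))"
proof -
  define s where "s = 1 / sqrt d"
  have eq: "exp (- (d * t^2) / 2) = sqrt (2 * pi / d) * normal_density 0 s t" for t
  proof -
    have "s^2 = 1/d" using d by (simp add: s_def power_divide)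
    hence "normal_density 0 s t = 1 / sqrt (2 * pi * (1/d)) * exp (- (t^2) / (2 * (1/d)))"
      unfolding normal_density_def by simp
    also have "\<dots> = 1 / sqrt (2 * pi / d) * exp (- (d * t^2) / 2)" using d by (simp add: field_simps)
    finally have "normal_density 0 s t = 1 / sqrt (2 * pi / d) * exp (- (d * t^2) / 2)" .
    thus ?thesis using d by simp
  qed
  have "(\<integral>\<^sup>+t. ennreal (normal_density 0 s t) \<partial>lborel) = ennreal 1"
  proof -
    have "s > 0" using d by (simp add: s_def)
    thus ?thesis by (subst nn_integral_eq_integral) (auto simp: integrable_normal_density integral_normal_density)
  qed
  hence "(\<integral>\<^sup>+t. ennreal (sqrt (2 * pi / d)) * ennreal (normal_density 0 s t) \<partial>lborel) = ennreal (sqrt (2 * pi / d))"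
    by (subst nn_integral_cmult) auto
  thus ?thesis unfolding eq using d by (simp add: ennreal_mult)
qed

lemma sqrt_prod_real: "finite A \<Longrightarrow> (\<Prod>i\<in>A. sqrt (f i)) = sqrt (\<Prod>i\<in>A. f i :: real)"
  by (induct rule: finite_induct) (simp_all add: real_sqrt_mult)

lemma Basis_vec_real: "(Basis :: (real^'k) set) = (\<lambda>i. axis i 1) ` UNIV"
  by (auto simp: Basis_vec_def)

lemma gauss_diag:
  fixes H :: "real^'k^'k"
  assumes diag: "\<And>i j. i \<noteq> j \<Longrightarrow> H$i$j = 0" and pos: "\<And>i. H$i$i > 0"
  shows "(\<integral>\<^sup>+x. ennreal (exp (- (x \<bullet> (H *v x)) / 2)) \<partial>lborel) = ennreal (sqrt ((2*pi)^CARD('k) / det H))"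
proof -
  define F where "F b t = ennreal (exp (- ((b \<bullet> (H *v b)) * t^2) / 2))" for b :: "real^'k" and t :: real
  have inj: "inj (\<lambda>i::'k. axis i (1::real))" by (auto simp: inj_def axis_eq_axis)
  have bHb: "axis i 1 \<bullet> (H *v axis i 1) = H$i$i" for i
  proof -
    have "axis i 1 \<bullet> (H *v axis i 1) = (H *v axis i 1)$i" by (simp add: inner_axis')
    also have "\<dots> = (\<Sum>j\<in>UNIV. H$i$j * (axis i 1 :: real^'k)$j)" by (simp add: matrix_vector_mult_def)
    also have "\<dots> = (\<Sum>j\<in>UNIV. if j = i then H$i$i else 0)" by (rule sum.cong) (auto simp: axis_def)
    finally show ?thesis by simp
  qed
  have quad: "x \<bullet> (H *v x) = (\<Sum>i\<in>UNIV. H$i$i * (x$i)^2)" for x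
  proof -
    have "x \<bullet> (H *v x) = (\<Sum>i\<in>UNIV. x$i * (\<Sum>j\<in>UNIV. H$i$j * x$j))"
      by (simp add: inner_vec_def matrix_vector_mult_def)
    also have "\<dots> = (\<Sum>i\<in>UNIV. x$i * (H$i$i * x$i))"
    proof (rule sum.cong)
      fix i :: 'k
      have "(\<Sum>j\<in>UNIV. H$i$j * x$j) = (\<Sum>j\<in>UNIV. if j = i then H$i$i * x$i else 0)"
        by (rule sum.cong) (auto simp: diag)
      thus "x$i * (\<Sum>j\<in>UNIV. H$i$j * x$j) = x$i * (H$i$i * x$i)" by simp
    qed simp
    finally show ?thesis by (simp add: power2_eq_square mult_ac)
  qed
  have pt: "ennreal (exp (- (x \<bullet> (H *v x)) / 2)) = (\<Prod>b\<in>Basis. F b (x \<bullet> b))" for x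
  proof -
    have "(\<Prod>b\<in>Basis. F b (x \<bullet> b)) = (\<Prod>i\<in>UNIV. F (axis i 1) (x \<bullet> axis i 1))"
      unfolding Basis_vec_real by (subst prod.reindex[OF inj]) simp
    also have "\<dots> = (\<Prod>i\<in>UNIV. ennreal (exp (- (H$i$i * (x$i)^2) / 2)))"
      by (simp add: F_def bHb inner_axis)
    also have "\<dots> = ennreal (\<Prod>i\<in>UNIV. exp (- (H$i$i * (x$i)^2) / 2))"
      by (rule prod_ennreal) simp
    also have "(\<Prod>i\<in>UNIV. exp (- (H$i$i * (x$i)^2) / 2)) = exp (\<Sum>i\<in>UNIV. - (H$i$i * (x$i)^2) / 2)"
      by (simp add: exp_sum)
    also have "(\<Sum>i\<in>UNIV. - (H$i$i * (x$i)^2) / 2) = - (x \<bullet> (H *v x)) / 2"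
      by (simp add: quad sum_negf sum_divide_distrib)
    finally show ?thesis by simp
  qed
  have "(\<integral>\<^sup>+x. ennreal (exp (- (x \<bullet> (H *v x)) / 2)) \<partial>lborel) = (\<integral>\<^sup>+x. (\<Prod>b\<in>Basis. F b (x \<bullet> b)) \<partial>lborel)"
    by (simp only: pt)
  also have "\<dots> = (\<Prod>b\<in>Basis. (\<integral>\<^sup>+t. F b t \<partial>lborel))"
    by (rule nn_integral_lborel_prod) (auto simp: F_def)
  also have "\<dots> = (\<Prod>i\<in>UNIV. (\<integral>\<^sup>+t. F (axis i 1) t \<partial>lborel))"
    unfolding Basis_vec_real by (subst prod.reindex[OF inj]) simp
  also have "\<dots> = (\<Prod>i\<in>UNIV. ennreal (sqrt (2 * pi / H$i$i)))"
    by (rule prod.cong) (use gauss1d[OF pos] in \<open>simp_all add: F_def bHb\<close>)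
  also have "\<dots> = ennreal (\<Prod>i\<in>UNIV. sqrt (2 * pi / H$i$i))"
    by (rule prod_ennreal) (simp add: less_imp_le[OF pos])
  also have "(\<Prod>i\<in>UNIV. sqrt (2 * pi / H$i$i)) = sqrt ((2*pi)^CARD('k) / det H)"
    by (simp add: det_diagonal[OF diag] sqrt_prod_real prod_dividef)
  finally show ?thesis .
qed


lemma mat_entry: "(M::real^'k^'k)$k$l = axis k 1 \<bullet> (M *v axis l 1)"
proof -
  have "axis k 1 \<bullet> (M *v axis l 1) = (M *v axis l 1)$k" by (simp add: inner_axis')
  also have "\<dots> = (\<Sum>j\<in>UNIV. M$k$j * (axis l 1 :: real^'k)$j)" by (simp add: matrix_vector_mult_def)
  also have "\<dots> = (\<Sum>j\<in>UNIV. if j = l then M$k$l else 0)" by (rule sum.cong) (auto simp: axis_def)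
  finally show ?thesis by simp
qed

lemma mv_axis_entry: "((M::real^'k^'k) *v axis l 1)$k = M$k$l"
proof -
  have "(M *v axis l 1)$k = (\<Sum>j\<in>UNIV. M$k$j * (axis l 1 :: real^'k)$j)" by (simp add: matrix_vector_mult_def)
  also have "\<dots> = (\<Sum>j\<in>UNIV. if j = l then M$k$l else 0)" by (rule sum.cong) (auto simp: axis_def)
  finally show ?thesis by simp
qed

lemma det_shear:
  fixes a :: "real^'k"
  assumes ai: "a $ i = 0"
  shows "det (\<chi> k l. (if k = l then 1 else 0) + (if k = i then a$l else 0) :: real^'k^'k) = 1"
proof -
  have rowI: "row j (mat 1 :: real^'k^'k) = axis j 1" for j
    by (simp add: row_def mat_def axis_def vec_eq_iff)
  have "a = (\<Sum>j\<in>UNIV - {i}. a$j *s axis j 1)"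
  proof -
    have "(\<Sum>j\<in>UNIV - {i}. a$j *s axis j 1)$k = a$k" for k
    proof -
      have "(\<Sum>j\<in>UNIV - {i}. a$j *s axis j 1)$k = (\<Sum>j\<in>UNIV - {i}. a$j * (axis j 1 :: real^'k)$k)"
        by (simp add: sum_component)
      also have "\<dots> = (\<Sum>j\<in>UNIV - {i}. if j = k then a$k else 0)"
        by (rule sum.cong) (auto simp: axis_def)
      also have "\<dots> = a$k" using ai by (cases "k = i") auto
      finally show ?thesis .
    qed
    thus ?thesis by (simp add: vec_eq_iff)
  qed
  moreover have "(\<Sum>j\<in>UNIV - {i}. a$j *s axis j 1) \<in> vec.span {row j (mat 1 :: real^'k^'k) |j. j \<noteq> i}"
    by (intro vec.span_sum vec.span_scale vec.span_base) (auto simp: rowI)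
  ultimately have sp: "a \<in> vec.span {row j (mat 1 :: real^'k^'k) |j. j \<noteq> i}" by metis
  have "(\<chi> k l. (if k = l then 1 else 0) + (if k = i then a$l else 0) :: real^'k^'k)
      = (\<chi> k. if k = i then row i (mat 1) + a else row k (mat 1))"
    by (simp add: vec_eq_iff rowI axis_def)
  also have "det \<dots> = det (mat 1 :: real^'k^'k)" by (rule det_row_span[OF sp])
  finally show ?thesis by simp
qed

lemma gauss_pd_induct:
  fixes H :: "real^'k^'k"
  shows "card (UNIV - S) = N \<Longrightarrow> transpose H = H \<Longrightarrow> (\<forall>x. x \<noteq> 0 \<longrightarrow> 0 < x \<bullet> (H *v x)) \<Longrightarrow>
    (\<forall>k\<in>S. \<forall>l. l \<noteq> k \<longrightarrow> H$k$l = 0) \<Longrightarrow>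
    det H > 0 \<and> (\<integral>\<^sup>+x. ennreal (exp (- (x \<bullet> (H *v x)) / 2)) \<partial>lborel) = ennreal (sqrt ((2*pi)^CARD('k) / det H))"
proof (induction N arbitrary: S H)
  case 0
  hence S: "S = UNIV" by auto
  have diag: "H$i$j = 0" if "i \<noteq> j" for i j using 0(4) that S by auto
  have pos: "H$i$i > 0" for i
  proof -
    have "0 < axis i 1 \<bullet> (H *v axis i 1)" using 0(3) by (simp add: axis_eq_0_iff)
    thus ?thesis by (metis mat_entry)
  qed
  have "det H > 0" by (simp add: det_diagonal[OF diag] pos prod_pos)
  thus ?case using gauss_diag[OF diag pos] by simp
next
  case (Suc N)
  have "UNIV - S \<noteq> {}" using Suc.prems(1) by (metis card.empty nat.distinct(1))
  then obtain i where iS: "i \<notin> S" by blast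
  have symi: "a \<bullet> (H *v b) = b \<bullet> (H *v a)" for a b
    using inner_mv_sym[OF Suc.prems(2), of a b] by (simp add: inner_commute)
  have Hsym: "H$k$l = H$l$k" for k l
  proof -
    have "H$k$l = axis k 1 \<bullet> (H *v axis l 1)" by (rule mat_entry)
    also have "\<dots> = axis l 1 \<bullet> (H *v axis k 1)" by (rule symi)
    also have "\<dots> = H$l$k" by (rule mat_entry[symmetric])
    finally show ?thesis .
  qed
  define d where "d = H$i$i"
  have "0 < axis i 1 \<bullet> (H *v axis i 1)" using Suc.prems(3) by (simp add: axis_eq_0_iff)
  moreover have "d = axis i 1 \<bullet> (H *v axis i 1)" unfolding d_def by (rule mat_entry)
  ultimately have d: "d > 0" by simp
  define a :: "real^'k" where "a = (\<chi> l. if l = i then 0 else - H$i$l / d)"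
  have ai: "a$i = 0" by (simp add: a_def)
  define E :: "real^'k^'k" where "E = (\<chi> k l. (if k = l then 1 else 0) + (if k = i then a$l else 0))"
  have Ev: "E *v y = y + (a \<bullet> y) *\<^sub>R axis i 1" for y
  proof -
    have "(E *v y)$k = (y + (a \<bullet> y) *\<^sub>R axis i 1)$k" for k
    proof -
      have "(E *v y)$k = (\<Sum>l\<in>UNIV. ((if k = l then 1 else 0) + (if k = i then a$l else 0)) * y$l)"
        by (simp add: E_def matrix_vector_mult_def)
      also have "\<dots> = (\<Sum>l\<in>UNIV. (if k = l then 1 else 0) * y$l) + (\<Sum>l\<in>UNIV. (if k = i then a$l else 0) * y$l)"
        by (simp only: distrib_right sum.distrib)
      also have "\<dots> = y$k + (if k = i then a \<bullet> y else 0)"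
      proof -
        have "(\<Sum>l\<in>UNIV. (if k = l then 1 else 0) * y$l) = (\<Sum>l\<in>UNIV. if l = k then y$l else 0)"
          by (rule sum.cong) auto
        thus ?thesis by (cases "k = i") (simp_all add: inner_vec_def)
      qed
      finally show ?thesis by (simp add: axis_def)
    qed
    thus ?thesis by (simp add: vec_eq_iff)
  qed
  define H' where "H' = transpose E ** H ** E"
  have quad2: "z \<bullet> (H' *v y) = (E *v z) \<bullet> (H *v (E *v y))" for z y
  proof -
    have "H' *v y = transpose E *v (H *v (E *v y))" by (simp only: H'_def matrix_vector_mul_assoc matrix_mul_assoc)
    thus ?thesis using inner_mv_transpose[of E z "H *v (E *v y)"] by simp
  qed
  have quad: "y \<bullet> (H' *v y) = (E *v y) \<bullet> (H *v (E *v y))" for y by (rule quad2)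
  have symH': "transpose H' = H'"
    using Suc.prems(2) by (simp add: H'_def matrix_transpose_mul matrix_mul_assoc)
  have Einj: "E *v y \<noteq> 0" if "y \<noteq> 0" for y
  proof
    assume E0: "E *v y = 0"
    have yk: "y$k = 0" if "k \<noteq> i" for k
      using arg_cong[OF E0, of "\<lambda>v. v$k"] that by (simp add: Ev axis_def)
    have "a \<bullet> y = 0" unfolding inner_vec_def 
    proof (rule sum.neutral, rule ballI)
      fix x show "a$x \<bullet> y$x = 0" by (cases "x = i") (simp_all add: ai yk)
    qed
    hence "y$i = 0" using arg_cong[OF E0, of "\<lambda>v. v$i"] by (simp add: Ev)
    hence "y = 0" using yk by (metis vec_eq_iff zero_index)
    thus False using that by simp
  qed
  have pdH': "\<forall>x. x \<noteq> 0 \<longrightarrow> 0 < x \<bullet> (H' *v x)" using Suc.prems(3) Einj quad by simp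
  have detE: "det E = 1" unfolding E_def by (rule det_shear[OF ai])
  have detH': "det H' = det H" by (simp add: H'_def det_mul detE)
  have Eaxis: "E *v axis l 1 = axis l 1 + (a$l) *\<^sub>R axis i 1" for l by (simp add: Ev inner_axis)
  have Hcol: "H *v axis k 1 = H$k$k *\<^sub>R axis k 1" if "k \<in> S" for k
  proof -
    have "(H *v axis k 1)$m = (H$k$k *\<^sub>R axis k 1)$m" for m
    proof -
      have "(H *v axis k 1)$m = H$m$k" by (rule mv_axis_entry)
      thus ?thesis using Suc.prems(4) that Hsym[of m k] by (cases "m = k") (auto simp: axis_def)
    qed
    thus ?thesis by (simp add: vec_eq_iff)
  qed
  have diagH': "\<forall>k\<in>insert i S. \<forall>l. l \<noteq> k \<longrightarrow> H'$k$l = 0"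
  proof (intro ballI allI impI)
    fix k l assume k: "k \<in> insert i S" and lk: "l \<noteq> k"
    have "H'$k$l = (E *v axis k 1) \<bullet> (H *v (E *v axis l 1))"
      unfolding mat_entry[of H' k l] by (rule quad2)
    show "H'$k$l = 0"
    proof (cases "k = i")
      case True
      have "H'$k$l = axis i 1 \<bullet> (H *v (axis l 1 + (a$l) *\<^sub>R axis i 1))"
        using \<open>H'$k$l = _\<close> True ai by (simp add: Eaxis)
      also have "\<dots> = axis i 1 \<bullet> (H *v axis l 1) + a$l * (axis i 1 \<bullet> (H *v axis i 1))"
        unfolding mv_lin inner_add_right inner_scaleR_right by (rule refl)
      also have "\<dots> = H$i$l + a$l * d" unfolding d_def by (simp only: mat_entry[symmetric])
      also have "\<dots> = 0" using lk True d by (simp add: a_def)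
      finally show ?thesis .
    next
      case False
      hence kS: "k \<in> S" using k by simp
      have "a$k = 0" using False Suc.prems(4) kS Hsym[of i k] by (simp add: a_def)
      hence "H'$k$l = axis k 1 \<bullet> (H *v (E *v axis l 1))" using \<open>H'$k$l = _\<close> by (simp add: Eaxis)
      also have "\<dots> = (E *v axis l 1) \<bullet> (H *v axis k 1)" by (rule symi)
      also have "\<dots> = H$k$k * (E *v axis l 1)$k" by (simp add: Hcol[OF kS] inner_axis)
      also have "(E *v axis l 1)$k = 0" unfolding Eaxis using lk False by (simp add: axis_def)
      finally show ?thesis by simp
    qed
  qed
  have card': "card (UNIV - insert i S) = N" using Suc.prems(1) iS
    by (metis Diff_insert card_Diff_singleton diff_Suc_1 finite UNIV_I DiffI)
  from Suc.IH[OF card' symH' pdH' diagH'] have IH: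
    "det H' > 0" "(\<integral>\<^sup>+x. ennreal (exp (- (x \<bullet> (H' *v x)) / 2)) \<partial>lborel) = ennreal (sqrt ((2*pi)^CARD('k) / det H'))"
    by auto
  have "(\<integral>\<^sup>+x. ennreal (exp (- (x \<bullet> (H *v x)) / 2)) \<partial>lborel)
      = (\<integral>\<^sup>+x. ennreal (exp (- ((x + (a \<bullet> x) *\<^sub>R axis i 1) \<bullet> (H *v (x + (a \<bullet> x) *\<^sub>R axis i 1))) / 2)) \<partial>lborel)"
  proof (rule shear_invariant[OF _ ai, symmetric])
    have [measurable]: "(*v) H \<in> borel_measurable borel"
      by (rule borel_measurable_continuous_onI[OF linear_continuous_on[OF matrix_vector_mul_bounded_linear]])
    show "(\<lambda>x. ennreal (exp (- (x \<bullet> (H *v x)) / 2))) \<in> borel_measurable borel" by measurable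
  qed
  also have "\<dots> = (\<integral>\<^sup>+x. ennreal (exp (- (x \<bullet> (H' *v x)) / 2)) \<partial>lborel)"
    by (simp only: quad Ev)
  finally show ?case using IH detH' by simp
qed

lemma gauss_pd:
  fixes H :: "real^'k^'k"
  assumes "transpose H = H" "\<forall>x. x \<noteq> 0 \<longrightarrow> 0 < x \<bullet> (H *v x)"
  shows "det H > 0 \<and> (\<integral>\<^sup>+x. ennreal (exp (- (x \<bullet> (H *v x)) / 2)) \<partial>lborel) = ennreal (sqrt ((2*pi)^CARD('k) / det H))"
  using gauss_pd_induct[OF refl assms, of "{}"] by simp

declare transpose_matrix_vector[simp del] vector_transpose_matrix[simp del]

lemma sym_from_inner:
  fixes M :: "real^'k^'k"
  assumes "\<And>x y. (M *v x) \<bullet> y = x \<bullet> (M *v y)"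
  shows "transpose M = M"
proof -
  have "M$j$i = M$i$j" for i j
  proof -
    have "M$j$i = axis j 1 \<bullet> (M *v axis i 1)" by (rule mat_entry)
    also have "\<dots> = (M *v axis j 1) \<bullet> axis i 1" using assms[of "axis j 1" "axis i 1"] by simp
    also have "\<dots> = axis i 1 \<bullet> (M *v axis j 1)" by (rule inner_commute)
    also have "\<dots> = M$i$j" by (rule mat_entry[symmetric])
    finally show ?thesis .
  qed
  thus ?thesis by (simp add: transpose_def vec_eq_iff)
qed

lemma Sig_lemmas:
  fixes A :: "real^'n^'m" and \<sigma> \<tau> :: real
  assumes sp: "\<sigma> > 0" and tp: "\<tau> > 0"
  defines "Sig \<equiv> \<sigma>\<^sup>2 *\<^sub>R (mat 1 :: real^'m^'m) + \<tau>\<^sup>2 *\<^sub>R (A ** transpose A)"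
  shows "Sig *v x = \<sigma>\<^sup>2 *\<^sub>R x + \<tau>\<^sup>2 *\<^sub>R (A *v (transpose A *v x))"
    and "transpose Sig = Sig"
    and "Sig ** matrix_inv Sig = mat 1" and "matrix_inv Sig ** Sig = mat 1"
    and "transpose (matrix_inv Sig) = matrix_inv Sig"
    and "\<forall>x. 0 \<le> x \<bullet> (matrix_inv Sig *v x)"
    and "matrix_inv Sig *v (A *v (transpose A *v z)) = (1/\<tau>\<^sup>2) *\<^sub>R (z - \<sigma>\<^sup>2 *\<^sub>R (matrix_inv Sig *v z))"
    and "det Sig \<noteq> 0"
proof -
  have Sv: "Sig *v x = \<sigma>\<^sup>2 *\<^sub>R x + \<tau>\<^sup>2 *\<^sub>R (A *v (transpose A *v x))" for x
    by (simp add: Sig_def matrix_vector_mult_add_rdistrib scaleR_matrix_vector_assoc[symmetric] matrix_vector_mul_assoc[symmetric] del: transpose_matrix_vector)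
  thus "Sig *v x = \<sigma>\<^sup>2 *\<^sub>R x + \<tau>\<^sup>2 *\<^sub>R (A *v (transpose A *v x))" .
  have AAt: "(A *v (transpose A *v x)) \<bullet> y = (transpose A *v x) \<bullet> (transpose A *v y)" for x y
    by (simp only: inner_mv_transpose)
  have Sxy: "(Sig *v x) \<bullet> y = \<sigma>\<^sup>2 * (x \<bullet> y) + \<tau>\<^sup>2 * ((transpose A *v x) \<bullet> (transpose A *v y))" for x y
    by (simp add: Sv inner_add_left AAt)
  have symS: "transpose Sig = Sig"
  proof (rule sym_from_inner)
    fix x y
    have "x \<bullet> (Sig *v y) = (Sig *v y) \<bullet> x" by (rule inner_commute)
    also have "\<dots> = \<sigma>\<^sup>2 * (y \<bullet> x) + \<tau>\<^sup>2 * ((transpose A *v y) \<bullet> (transpose A *v x))" by (rule Sxy)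
    also have "\<dots> = (Sig *v x) \<bullet> y" by (simp only: Sxy) (simp add: inner_commute)
    finally show "(Sig *v x) \<bullet> y = x \<bullet> (Sig *v y)" by simp
  qed
  thus "transpose Sig = Sig" .
  have inj: "inj ((*v) Sig)"
  proof (rule injI)
    fix x y assume "Sig *v x = Sig *v y"
    hence "Sig *v (x - y) = 0" by (simp add: matrix_vector_mult_diff_distrib)
    hence "(Sig *v (x - y)) \<bullet> (x - y) = 0" by simp
    hence "\<sigma>\<^sup>2 * ((x - y) \<bullet> (x - y)) + \<tau>\<^sup>2 * ((transpose A *v (x - y)) \<bullet> (transpose A *v (x - y))) = 0"
      by (simp only: Sxy)
    moreover have "0 \<le> \<tau>\<^sup>2 * ((transpose A *v (x - y)) \<bullet> (transpose A *v (x - y)))" by simp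
    ultimately have "\<sigma>\<^sup>2 * ((x - y) \<bullet> (x - y)) \<le> 0" by linarith
    hence "(x - y) \<bullet> (x - y) \<le> 0" using sp by (simp add: mult_le_0_iff)
    hence "(x - y) \<bullet> (x - y) = 0" using inner_ge_zero[of "x - y"] by linarith
    thus "x = y" by simp
  qed
  hence invS: "invertible Sig" using invertible_left_inverse matrix_left_invertible_injective by blast
  note SSi = matrix_inv_props[OF invS]
  show "Sig ** matrix_inv Sig = mat 1" "matrix_inv Sig ** Sig = mat 1" using SSi by auto
  define Si where "Si = matrix_inv Sig"
  have "Sig ** transpose Si = mat 1"
  proof -
    have "Sig ** transpose Si = transpose (Si ** transpose Sig)" by (simp add: matrix_transpose_mul)
    also have "\<dots> = mat 1" using SSi symS by (simp add: Si_def)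
    finally show ?thesis .
  qed
  hence "matrix_inv Sig = transpose Si" by (rule matrix_inv_eq)
  thus "transpose (matrix_inv Sig) = matrix_inv Sig" by (simp add: Si_def)
  show "\<forall>x. 0 \<le> x \<bullet> (matrix_inv Sig *v x)"
  proof
    fix x
    define z where "z = matrix_inv Sig *v x"
    have "x = Sig *v z" using SSi by (simp add: z_def matrix_vector_mul_assoc)
    hence "x \<bullet> (matrix_inv Sig *v x) = (Sig *v z) \<bullet> z" by (simp add: z_def)
    also have "\<dots> \<ge> 0" using sp tp by (simp add: Sxy)
    finally show "0 \<le> x \<bullet> (matrix_inv Sig *v x)" .
  qed
  have SiS: "matrix_inv Sig *v (Sig *v z) = z" for z using SSi by (simp add: matrix_vector_mul_assoc)
  have "A *v (transpose A *v z) = (1/\<tau>\<^sup>2) *\<^sub>R (Sig *v z - \<sigma>\<^sup>2 *\<^sub>R z)" using tp by (simp add: Sv)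
  hence "matrix_inv Sig *v (A *v (transpose A *v z)) = (1/\<tau>\<^sup>2) *\<^sub>R (matrix_inv Sig *v (Sig *v z) - \<sigma>\<^sup>2 *\<^sub>R (matrix_inv Sig *v z))"
    by (simp add: matrix_vector_mult_diff_distrib matrix_vector_mult_scaleR)
  thus "matrix_inv Sig *v (A *v (transpose A *v z)) = (1/\<tau>\<^sup>2) *\<^sub>R (z - \<sigma>\<^sup>2 *\<^sub>R (matrix_inv Sig *v z))"
    by (simp only: SiS)
  show "det Sig \<noteq> 0" using invS invertible_det_nz by blast
qed


lemma gd_iso:
  fixes mu x :: "real^'k" and c :: real
  assumes c: "c > 0"
  shows "gauss_density mu (c *\<^sub>R mat 1) x = exp (- (norm (x - mu))\<^sup>2 / (2 * c)) / sqrt ((2 * pi) ^ CARD('k) * c ^ CARD('k))"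
proof -
  have inv: "matrix_inv (c *\<^sub>R mat 1 :: real^'k^'k) = (1/c) *\<^sub>R mat 1"
    by (rule matrix_inv_eq) (use c in \<open>simp add: matrix_scalar_ac\<close>)
  have det: "det (c *\<^sub>R mat 1 :: real^'k^'k) = c ^ CARD('k)"
  proof -
    have "det (c *\<^sub>R mat 1 :: real^'k^'k) = (\<Prod>i\<in>UNIV. (c *\<^sub>R mat 1 :: real^'k^'k)$i$i)"
      by (rule det_diagonal) (simp add: mat_def)
    also have "\<dots> = c ^ CARD('k)" by (simp add: mat_def)
    finally show ?thesis .
  qed
  have "(x - mu) \<bullet> (matrix_inv (c *\<^sub>R mat 1) *v (x - mu)) = (norm (x - mu))\<^sup>2 / c"
    by (simp add: inv scaleR_matrix_vector_assoc[symmetric] power2_norm_eq_inner)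
  thus ?thesis unfolding gauss_density_def det by (simp add: field_simps)
qed

lemma H_lemmas:
  fixes A :: "real^'n^'m" and \<sigma> \<tau> :: real
  assumes sp: "\<sigma> > 0" and tp: "\<tau> > 0"
  defines "Sig \<equiv> \<sigma>\<^sup>2 *\<^sub>R (mat 1 :: real^'m^'m) + \<tau>\<^sup>2 *\<^sub>R (A ** transpose A)"
  defines "H \<equiv> (1/\<tau>\<^sup>2) *\<^sub>R (mat 1 :: real^'n^'n) + (1/\<sigma>\<^sup>2) *\<^sub>R (transpose A ** A)"
  defines "Spost \<equiv> \<tau>\<^sup>2 *\<^sub>R (mat 1 :: real^'n^'n) - \<tau>^4 *\<^sub>R (transpose A ** matrix_inv Sig ** A)"
  shows "H *v x = (1/\<tau>\<^sup>2) *\<^sub>R x + (1/\<sigma>\<^sup>2) *\<^sub>R (transpose A *v (A *v x))"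
    and "transpose H = H"
    and "\<forall>x. x \<noteq> 0 \<longrightarrow> 0 < x \<bullet> (H *v x)"
    and "matrix_inv Spost = H"
    and "det H > 0"
    and "det Spost = 1 / det H"
    and "H *v (\<tau>\<^sup>2 *\<^sub>R (transpose A *v (matrix_inv Sig *v r))) = (1/\<sigma>\<^sup>2) *\<^sub>R (transpose A *v r)"
proof -
  note SL = Sig_lemmas[OF sp tp, of A, folded Sig_def]
  define Si where "Si = matrix_inv Sig"
  have Hv: "H *v x = (1/\<tau>\<^sup>2) *\<^sub>R x + (1/\<sigma>\<^sup>2) *\<^sub>R (transpose A *v (A *v x))" for x
    by (simp add: H_def matrix_vector_mult_add_rdistrib scaleR_matrix_vector_assoc[symmetric] matrix_vector_mul_assoc[symmetric])
  thus "H *v x = (1/\<tau>\<^sup>2) *\<^sub>R x + (1/\<sigma>\<^sup>2) *\<^sub>R (transpose A *v (A *v x))" .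
  have Hxy: "(H *v x) \<bullet> y = (1/\<tau>\<^sup>2) * (x \<bullet> y) + (1/\<sigma>\<^sup>2) * ((A *v x) \<bullet> (A *v y))" for x y
  proof -
    have "(transpose A *v (A *v x)) \<bullet> y = (A *v x) \<bullet> (A *v y)"
      using inner_mv_transpose[of "transpose A" "A *v x" y] by (simp add: inner_commute)
    thus ?thesis by (simp add: Hv inner_add_left)
  qed
  show symH: "transpose H = H"
  proof (rule sym_from_inner)
    fix x y
    have "x \<bullet> (H *v y) = (H *v y) \<bullet> x" by (rule inner_commute)
    also have "\<dots> = (1/\<tau>\<^sup>2) * (y \<bullet> x) + (1/\<sigma>\<^sup>2) * ((A *v y) \<bullet> (A *v x))" by (rule Hxy)
    also have "\<dots> = (H *v x) \<bullet> y" by (simp only: Hxy) (simp add: inner_commute)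
    finally show "(H *v x) \<bullet> y = x \<bullet> (H *v y)" by simp
  qed
  show pd: "\<forall>x. x \<noteq> 0 \<longrightarrow> 0 < x \<bullet> (H *v x)"
  proof (intro allI impI)
    fix x :: "real^'n" assume "x \<noteq> 0"
    hence "0 < (1/\<tau>\<^sup>2) * (x \<bullet> x)" using tp by simp
    moreover have "0 \<le> (1/\<sigma>\<^sup>2) * ((A *v x) \<bullet> (A *v x))" by simp
    ultimately have "0 < (H *v x) \<bullet> x" unfolding Hxy by linarith
    thus "0 < x \<bullet> (H *v x)" by (simp add: inner_commute)
  qed
  have SiA: "Si *v (A *v (transpose A *v z)) = (1/\<tau>\<^sup>2) *\<^sub>R (z - \<sigma>\<^sup>2 *\<^sub>R (Si *v z))" for z
    using SL(7) by (simp add: Si_def)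
  have Spv: "Spost *v v = \<tau>\<^sup>2 *\<^sub>R v - \<tau>^4 *\<^sub>R (transpose A *v (Si *v (A *v v)))" for v
    by (simp add: Spost_def Si_def matrix_vector_mult_diff_rdistrib scaleR_matrix_vector_assoc[symmetric] matrix_vector_mul_assoc[symmetric])
  have "Spost *v (H *v x) = x" for x
  proof -
    have "Si *v (A *v (H *v x)) = (1/(\<sigma>\<^sup>2 * \<tau>\<^sup>2)) *\<^sub>R (A *v x)"
    proof -
      have "A *v (H *v x) = (1/\<tau>\<^sup>2) *\<^sub>R (A *v x) + (1/\<sigma>\<^sup>2) *\<^sub>R (A *v (transpose A *v (A *v x)))"
        by (simp add: Hv matrix_vector_right_distrib matrix_vector_mult_scaleR)
      hence "Si *v (A *v (H *v x)) = (1/\<tau>\<^sup>2) *\<^sub>R (Si *v (A *v x)) + (1/\<sigma>\<^sup>2) *\<^sub>R (Si *v (A *v (transpose A *v (A *v x))))"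
        by (simp add: matrix_vector_right_distrib matrix_vector_mult_scaleR)
      also have "\<dots> = (1/(\<sigma>\<^sup>2 * \<tau>\<^sup>2)) *\<^sub>R (A *v x)"
        unfolding SiA using sp tp by (simp add: algebra_simps field_simps)
      finally show ?thesis .
    qed
    hence "Spost *v (H *v x) = \<tau>\<^sup>2 *\<^sub>R (H *v x) - \<tau>^4 *\<^sub>R (transpose A *v ((1/(\<sigma>\<^sup>2 * \<tau>\<^sup>2)) *\<^sub>R (A *v x)))"
      by (simp add: Spv)
    also have "\<dots> = x" using sp tp
      by (simp add: Hv matrix_vector_mult_scaleR algebra_simps power2_eq_square power4_eq_xxxx)
    finally show ?thesis .
  qed
  hence "(Spost ** H) *v x = mat 1 *v x" for x by (simp add: matrix_vector_mul_assoc[symmetric])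
  hence SH: "Spost ** H = mat 1" by (simp add: matrix_eq)
  thus "matrix_inv Spost = H" by (rule matrix_inv_eq)
  have "det H > 0" using gauss_pd[OF symH pd] by blast
  thus "det H > 0" .
  have "det Spost * det H = 1" using arg_cong[OF SH, of det] by (simp add: det_mul)
  thus "det Spost = 1 / det H" using \<open>det H > 0\<close> by (simp add: field_simps)
  have SSi: "Sig *v (Si *v r) = r" using SL(3) by (simp add: Si_def matrix_vector_mul_assoc)
  have AAtSi: "A *v (transpose A *v (Si *v r)) = (1/\<tau>\<^sup>2) *\<^sub>R (r - \<sigma>\<^sup>2 *\<^sub>R (Si *v r))"
  proof -
    have "r = \<sigma>\<^sup>2 *\<^sub>R (Si *v r) + \<tau>\<^sup>2 *\<^sub>R (A *v (transpose A *v (Si *v r)))"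
      using SSi SL(1)[of "Si *v r"] by simp
    hence "\<tau>\<^sup>2 *\<^sub>R (A *v (transpose A *v (Si *v r))) = r - \<sigma>\<^sup>2 *\<^sub>R (Si *v r)" by (simp add: algebra_simps)
    hence "(1/\<tau>\<^sup>2) *\<^sub>R (\<tau>\<^sup>2 *\<^sub>R (A *v (transpose A *v (Si *v r)))) = (1/\<tau>\<^sup>2) *\<^sub>R (r - \<sigma>\<^sup>2 *\<^sub>R (Si *v r))" by simp
    thus ?thesis using tp by simp
  qed
  show "H *v (\<tau>\<^sup>2 *\<^sub>R (transpose A *v (matrix_inv Sig *v r))) = (1/\<sigma>\<^sup>2) *\<^sub>R (transpose A *v r)"
  proof -
    define w where "w = transpose A *v (Si *v r)"
    have "H *v (\<tau>\<^sup>2 *\<^sub>R w) = \<tau>\<^sup>2 *\<^sub>R ((1/\<tau>\<^sup>2) *\<^sub>R w + (1/\<sigma>\<^sup>2) *\<^sub>R (transpose A *v (A *v w)))"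
      by (simp only: matrix_vector_mult_scaleR Hv)
    also have "A *v w = (1/\<tau>\<^sup>2) *\<^sub>R (r - \<sigma>\<^sup>2 *\<^sub>R (Si *v r))" unfolding w_def by (rule AAtSi)
    also have "transpose A *v ((1/\<tau>\<^sup>2) *\<^sub>R (r - \<sigma>\<^sup>2 *\<^sub>R (Si *v r))) = (1/\<tau>\<^sup>2) *\<^sub>R (transpose A *v r - \<sigma>\<^sup>2 *\<^sub>R w)"
      by (simp only: w_def matrix_vector_mult_scaleR matrix_vector_mult_diff_distrib)
    also have "\<tau>\<^sup>2 *\<^sub>R ((1/\<tau>\<^sup>2) *\<^sub>R w + (1/\<sigma>\<^sup>2) *\<^sub>R ((1/\<tau>\<^sup>2) *\<^sub>R (transpose A *v r - \<sigma>\<^sup>2 *\<^sub>R w))) = (1/\<sigma>\<^sup>2) *\<^sub>R (transpose A *v r)"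
      using sp tp by (simp add: scaleR_add_right scaleR_diff_right)
    finally show ?thesis by (simp add: w_def Si_def)
  qed
qed


lemma AAtSi_lemma:
  fixes A :: "real^'n^'m" and \<sigma> \<tau> :: real
  assumes sp: "\<sigma> > 0" and tp: "\<tau> > 0"
  defines "Sig \<equiv> \<sigma>\<^sup>2 *\<^sub>R (mat 1 :: real^'m^'m) + \<tau>\<^sup>2 *\<^sub>R (A ** transpose A)"
  shows "A *v (transpose A *v (matrix_inv Sig *v r)) = (1/\<tau>\<^sup>2) *\<^sub>R (r - \<sigma>\<^sup>2 *\<^sub>R (matrix_inv Sig *v r))"
proof -
  note SL = Sig_lemmas[OF sp tp, of A, folded Sig_def]
  define Si where "Si = matrix_inv Sig"
  have SSi: "Sig *v (Si *v r) = r" using SL(3) by (simp add: Si_def matrix_vector_mul_assoc)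
  have "r = \<sigma>\<^sup>2 *\<^sub>R (Si *v r) + \<tau>\<^sup>2 *\<^sub>R (A *v (transpose A *v (Si *v r)))"
    using SSi SL(1)[of "Si *v r"] by simp
  hence "\<tau>\<^sup>2 *\<^sub>R (A *v (transpose A *v (Si *v r))) = r - \<sigma>\<^sup>2 *\<^sub>R (Si *v r)" by (simp add: algebra_simps)
  hence "(1/\<tau>\<^sup>2) *\<^sub>R (\<tau>\<^sup>2 *\<^sub>R (A *v (transpose A *v (Si *v r)))) = (1/\<tau>\<^sup>2) *\<^sub>R (r - \<sigma>\<^sup>2 *\<^sub>R (Si *v r))" by simp
  thus ?thesis using tp by (simp add: Si_def)
qed

lemma quad_identity:
  fixes A :: "real^'n^'m" and \<sigma> \<tau> :: real and x mu :: "real^'n" and y :: "real^'m"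
  assumes sp: "\<sigma> > 0" and tp: "\<tau> > 0"
  defines "Sig \<equiv> \<sigma>\<^sup>2 *\<^sub>R (mat 1 :: real^'m^'m) + \<tau>\<^sup>2 *\<^sub>R (A ** transpose A)"
  defines "H \<equiv> (1/\<tau>\<^sup>2) *\<^sub>R (mat 1 :: real^'n^'n) + (1/\<sigma>\<^sup>2) *\<^sub>R (transpose A ** A)"
  defines "r \<equiv> y - A *v mu"
  defines "m \<equiv> mu + \<tau>\<^sup>2 *\<^sub>R (transpose A *v (matrix_inv Sig *v r))"
  shows "(norm (x - mu))\<^sup>2 / \<tau>\<^sup>2 + (norm (y - A *v x))\<^sup>2 / \<sigma>\<^sup>2
       = (x - m) \<bullet> (H *v (x - m)) + r \<bullet> (matrix_inv Sig *v r)"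
proof -
  note HL = H_lemmas[OF sp tp, of A, folded Sig_def H_def]
  note SL = Sig_lemmas[OF sp tp, of A, folded Sig_def]
  define Si where "Si = matrix_inv Sig"
  define u where "u = x - mu"
  define p where "p = \<tau>\<^sup>2 *\<^sub>R (transpose A *v (Si *v r))"
  have xm: "x - m = u - p" by (simp add: u_def p_def m_def Si_def)
  have yAx: "y - A *v x = r - A *v u" by (simp add: r_def u_def matrix_vector_mult_diff_distrib)
  have Hp: "H *v p = (1/\<sigma>\<^sup>2) *\<^sub>R (transpose A *v r)" unfolding p_def Si_def by (rule HL(7))
  have symi: "a \<bullet> (H *v b) = b \<bullet> (H *v a)" for a b
    using inner_mv_sym[OF HL(2), of a b] by (simp add: inner_commute)
  have tr: "a \<bullet> (transpose A *v b) = (A *v a) \<bullet> b" for a b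
    using inner_mv_transpose[of A a b] by simp
  have uHu: "u \<bullet> (H *v u) = (1/\<tau>\<^sup>2) * (u \<bullet> u) + (1/\<sigma>\<^sup>2) * ((A *v u) \<bullet> (A *v u))"
    by (simp add: HL(1) inner_add_right tr)
  have uHp: "u \<bullet> (H *v p) = (1/\<sigma>\<^sup>2) * ((A *v u) \<bullet> r)" by (simp add: Hp tr)
  have pHp: "p \<bullet> (H *v p) = (1/\<sigma>\<^sup>2) * (r \<bullet> r) - (Si *v r) \<bullet> r"
  proof -
    have "p \<bullet> (H *v p) = (1/\<sigma>\<^sup>2) * (p \<bullet> (transpose A *v r))" by (simp only: Hp inner_scaleR_right)
    also have "p \<bullet> (transpose A *v r) = (A *v p) \<bullet> r" by (rule tr)
    also have "A *v p = \<tau>\<^sup>2 *\<^sub>R (A *v (transpose A *v (Si *v r)))" by (simp only: p_def matrix_vector_mult_scaleR)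
    finally have "p \<bullet> (H *v p) = (1/\<sigma>\<^sup>2) * (\<tau>\<^sup>2 * ((A *v (transpose A *v (Si *v r))) \<bullet> r))" by simp
    also have "A *v (transpose A *v (Si *v r)) = (1/\<tau>\<^sup>2) *\<^sub>R (r - \<sigma>\<^sup>2 *\<^sub>R (Si *v r))"
      unfolding Si_def Sig_def by (rule AAtSi_lemma[OF sp tp])
    also have "\<tau>\<^sup>2 * (((1/\<tau>\<^sup>2) *\<^sub>R (r - \<sigma>\<^sup>2 *\<^sub>R (Si *v r))) \<bullet> r) = r \<bullet> r - \<sigma>\<^sup>2 * ((Si *v r) \<bullet> r)"
      using tp by (simp add: inner_diff_left)
    also have "(1/\<sigma>\<^sup>2) * (r \<bullet> r - \<sigma>\<^sup>2 * ((Si *v r) \<bullet> r)) = (1/\<sigma>\<^sup>2) * (r \<bullet> r) - (Si *v r) \<bullet> r"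
      using sp by (simp add: right_diff_distrib)
    finally show ?thesis .
  qed
  have "(x - m) \<bullet> (H *v (x - m)) = u \<bullet> (H *v u) - 2 * (u \<bullet> (H *v p)) + p \<bullet> (H *v p)"
    using symi[of p u] by (simp add: xm matrix_vector_mult_diff_distrib inner_diff_left inner_diff_right)
  also have "\<dots> = (1/\<tau>\<^sup>2) * (u \<bullet> u) + (1/\<sigma>\<^sup>2) * ((A *v u) \<bullet> (A *v u)) - 2 * ((1/\<sigma>\<^sup>2) * ((A *v u) \<bullet> r))
       + ((1/\<sigma>\<^sup>2) * (r \<bullet> r) - (Si *v r) \<bullet> r)" by (simp only: uHu uHp pHp)
  finally have R: "(x - m) \<bullet> (H *v (x - m)) = (1/\<tau>\<^sup>2) * (u \<bullet> u) + (1/\<sigma>\<^sup>2) * ((A *v u) \<bullet> (A *v u))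
       - 2 * ((1/\<sigma>\<^sup>2) * ((A *v u) \<bullet> r)) + ((1/\<sigma>\<^sup>2) * (r \<bullet> r) - (Si *v r) \<bullet> r)" .
  have L: "(norm (x - mu))\<^sup>2 / \<tau>\<^sup>2 + (norm (y - A *v x))\<^sup>2 / \<sigma>\<^sup>2
     = (1/\<tau>\<^sup>2) * (u \<bullet> u) + (1/\<sigma>\<^sup>2) * (r \<bullet> r - 2 * ((A *v u) \<bullet> r) + (A *v u) \<bullet> (A *v u))"
    unfolding yAx u_def[symmetric] power2_norm_eq_inner
    by (simp add: inner_diff_left inner_diff_right inner_commute)
  have "r \<bullet> (matrix_inv Sig *v r) = (Si *v r) \<bullet> r" by (simp add: Si_def inner_commute)
  thus ?thesis using L R by (simp add: algebra_simps)
qed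

declare transpose_matrix_vector[simp del] vector_transpose_matrix[simp del]

lemma mv_measurable[measurable]: "(*v) (M::real^'a^'b) \<in> borel_measurable borel"
  by (rule borel_measurable_continuous_onI[OF linear_continuous_on[OF matrix_vector_mul_bounded_linear]])

lemma nn_integral_translate:
  fixes f :: "'a::euclidean_space \<Rightarrow> ennreal"
  assumes [measurable]: "f \<in> borel_measurable borel"
  shows "(\<integral>\<^sup>+x. f (x - c) \<partial>lborel) = (\<integral>\<^sup>+x. f x \<partial>lborel)"
proof -
  have "(\<integral>\<^sup>+x. f x \<partial>lborel) = (\<integral>\<^sup>+x. f x \<partial>(distr lborel borel ((+) (- c))))"
    by (simp add: lborel_distr_plus)
  also have "\<dots> = (\<integral>\<^sup>+x. f (- c + x) \<partial>lborel)" by (subst nn_integral_distr) auto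
  finally show ?thesis by simp
qed

lemma lik_factor:
  fixes A :: "real^'n^'m" and \<sigma> \<tau> :: real and x mu :: "real^'n" and y :: "real^'m"
  assumes sp: "\<sigma> > 0" and tp: "\<tau> > 0"
  defines "Sig \<equiv> \<sigma>\<^sup>2 *\<^sub>R (mat 1 :: real^'m^'m) + \<tau>\<^sup>2 *\<^sub>R (A ** transpose A)"
  defines "H \<equiv> (1/\<tau>\<^sup>2) *\<^sub>R (mat 1 :: real^'n^'n) + (1/\<sigma>\<^sup>2) *\<^sub>R (transpose A ** A)"
  defines "r \<equiv> y - A *v mu"
  defines "m \<equiv> mu + \<tau>\<^sup>2 *\<^sub>R (transpose A *v (matrix_inv Sig *v r))"
  defines "K2 \<equiv> 1 / (sqrt ((2 * pi) ^ CARD('n) * (\<tau>\<^sup>2) ^ CARD('n)) * sqrt ((2 * pi) ^ CARD('m) * (\<sigma>\<^sup>2) ^ CARD('m)))"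
  shows "gauss_density mu (\<tau>\<^sup>2 *\<^sub>R mat 1) x * gauss_density (A *v x) (\<sigma>\<^sup>2 *\<^sub>R mat 1) y
     = K2 * exp (- (r \<bullet> (matrix_inv Sig *v r)) / 2) * exp (- ((x - m) \<bullet> (H *v (x - m))) / 2)"
proof -
  have Q: "(norm (x - mu))\<^sup>2 / \<tau>\<^sup>2 + (norm (y - A *v x))\<^sup>2 / \<sigma>\<^sup>2
       = (x - m) \<bullet> (H *v (x - m)) + r \<bullet> (matrix_inv Sig *v r)"
    unfolding m_def r_def Sig_def H_def by (rule quad_identity[OF sp tp])
  have n2: "norm (y - A *v x) = norm (A *v x - y)" by (rule norm_minus_commute)
  have "gauss_density mu (\<tau>\<^sup>2 *\<^sub>R mat 1) x * gauss_density (A *v x) (\<sigma>\<^sup>2 *\<^sub>R mat 1) y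
     = K2 * (exp (- (norm (x - mu))\<^sup>2 / (2 * \<tau>\<^sup>2)) * exp (- (norm (y - A *v x))\<^sup>2 / (2 * \<sigma>\<^sup>2)))"
    using sp tp by (simp add: gd_iso K2_def n2)
  also have "exp (- (norm (x - mu))\<^sup>2 / (2 * \<tau>\<^sup>2)) * exp (- (norm (y - A *v x))\<^sup>2 / (2 * \<sigma>\<^sup>2))
      = exp (- ((norm (x - mu))\<^sup>2 / \<tau>\<^sup>2 + (norm (y - A *v x))\<^sup>2 / \<sigma>\<^sup>2) / 2)"
    by (simp add: exp_add[symmetric] field_simps)
  also have "\<dots> = exp (- (r \<bullet> (matrix_inv Sig *v r)) / 2) * exp (- ((x - m) \<bullet> (H *v (x - m))) / 2)"
    by (simp add: Q exp_add[symmetric] field_simps)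
  finally show ?thesis by (simp add: mult_ac)
qed

declare transpose_matrix_vector[simp del] vector_transpose_matrix[simp del]

theorem theorem2:
  fixes A :: "real^'n^'m"
    and M :: nat and w :: "nat \<Rightarrow> real" and mu :: "nat \<Rightarrow> real^'n"
    and \<sigma> \<tau> C \<delta>0 :: real and ystar :: "real^'m" and jstar :: nat
  defines "Sig \<equiv> \<sigma>\<^sup>2 *\<^sub>R (mat 1 :: real^'m^'m) + \<tau>\<^sup>2 *\<^sub>R (A ** transpose A)"
  defines "s \<equiv> (\<lambda>j. (1/2) * (norm (psd_sqrt (matrix_inv Sig) *v (ystar - A *v mu j)))\<^sup>2)"
  defines "wt \<equiv> (\<lambda>j. w j * gauss_density (A *v mu j) Sig ystar)"
  defines "PJ \<equiv> (\<lambda>j. wt j / (\<Sum>i<M. wt i))"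
  defines "mpost \<equiv> mu jstar + \<tau>\<^sup>2 *\<^sub>R (transpose A *v (matrix_inv Sig *v (ystar - A *v mu jstar)))"
  defines "Spost \<equiv> \<tau>\<^sup>2 *\<^sub>R (mat 1 :: real^'n^'n) - \<tau>^4 *\<^sub>R (transpose A ** matrix_inv Sig ** A)"
  assumes M_pos: "M \<ge> 1"
    and sigma_pos: "\<sigma> > 0" and tau_pos: "\<tau> > 0"
    and w_nonneg: "\<forall>j<M. w j \<ge> 0" and w_sum: "(\<Sum>j<M. w j) = 1"
    and C_gt1: "C > 1"
    and w_ratio: "\<forall>i<M. \<forall>j<M. 1 / C \<le> w i / w j \<and> w i / w j \<le> C"
    and jstar_lt: "jstar < M"
    and jstar_unique: "\<forall>j<M. j \<noteq> jstar \<longrightarrow> s jstar < s j"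
    and delta0_pos: "\<delta>0 > 0"
    and gap: "\<forall>j<M. j \<noteq> jstar \<longrightarrow> (s j - s jstar) / real CARD('m) \<ge> \<delta>0"
  shows "(\<Sum>j\<in>{j. j < M \<and> j \<noteq> jstar}. PJ j) \<le> C * real M * exp (- \<delta>0 * real CARD('m))
     \<and> tv_dist (posterior (gm_prior M w mu \<tau>) A \<sigma> ystar) (gauss_measure mpost Spost)
         \<le> C * real M * exp (- \<delta>0 * real CARD('m))"
proof -
  define n where "n = CARD('n)"
  define mm where "mm = CARD('m)"
  note SL = Sig_lemmas[OF sigma_pos tau_pos, of A, folded Sig_def]
  define Si where "Si = matrix_inv Sig"
  define H where "H = (1/\<tau>\<^sup>2) *\<^sub>R (mat 1 :: real^'n^'n) + (1/\<sigma>\<^sup>2) *\<^sub>R (transpose A ** A)"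
  note HL = H_lemmas[OF sigma_pos tau_pos, of A, folded Sig_def H_def Spost_def]
  define R where "R = psd_sqrt Si"
  have R: "transpose R = R" "R ** R = Si"
    using psd_sqrt_char[OF SL(5) SL(6)] by (auto simp: R_def Si_def)
  define rr where "rr j = ystar - A *v mu j" for j
  have s_eq: "s j = (rr j \<bullet> (Si *v rr j)) / 2" for j
  proof -
    have "(norm (R *v rr j))\<^sup>2 = (R *v rr j) \<bullet> (R *v rr j)" by (simp add: power2_norm_eq_inner)
    also have "\<dots> = rr j \<bullet> (transpose R *v (R *v rr j))" by (rule inner_mv_transpose)
    also have "\<dots> = rr j \<bullet> (Si *v rr j)" by (simp add: R matrix_vector_mul_assoc)
    finally show ?thesis by (simp add: s_def R_def Si_def rr_def)
  qed
  define K1 where "K1 = sqrt ((2 * pi) ^ mm * det Sig)"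
  have K1: "K1 \<noteq> 0" using SL(8) by (simp add: K1_def mm_def)
  define W where "W j = w j * exp (- s j)" for j
  have wt_eq: "wt j = W j / K1" for j
  proof -
    have "gauss_density (A *v mu j) Sig ystar = exp (- s j) / K1"
      by (simp add: gauss_density_def s_eq K1_def mm_def rr_def Si_def)
    thus ?thesis by (simp add: wt_def W_def)
  qed
  have wpos: "w j > 0" if "j < M" for j
  proof -
    have "1 / C \<le> w j / w j" using w_ratio that by blast
    moreover have "1 / C > 0" using C_gt1 by simp
    ultimately have "w j \<noteq> 0" by auto
    thus ?thesis using w_nonneg that by force
  qed
  have Wpos: "W j > 0" if "j < M" for j using wpos[OF that] by (simp add: W_def)
  define SW where "SW = (\<Sum>i<M. W i)"
  have SWpos: "SW > 0" unfolding SW_def using Wpos M_pos by (intro sum_pos) (auto simp: lessThan_empty_iff)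
  have PJ_eq: "PJ j = W j / SW" for j
  proof -
    have "(\<Sum>i<M. wt i) = SW / K1" by (simp add: wt_eq SW_def sum_divide_distrib)
    thus ?thesis using K1 by (simp add: PJ_def wt_eq)
  qed
  have PJ_nn: "PJ j \<ge> 0" if "j < M" for j using Wpos[OF that] SWpos by (simp add: PJ_eq)
  have PJ_sum: "(\<Sum>j<M. PJ j) = 1" using SWpos by (simp add: PJ_eq SW_def sum_divide_distrib[symmetric])
  define bound where "bound = C * real M * exp (- \<delta>0 * real CARD('m))"
  define e where "e = C * exp (- \<delta>0 * real CARD('m))"
  have e_nn: "e \<ge> 0" using C_gt1 by (simp add: e_def)
  have each: "PJ j \<le> e" if j: "j < M" "j \<noteq> jstar" for j
  proof -
    have "W jstar \<le> SW" unfolding SW_def using Wpos jstar_lt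
      by (intro member_le_sum) (auto simp: less_imp_le)
    hence "W j / SW \<le> W j / W jstar"
      using Wpos[OF j(1)] Wpos[OF jstar_lt] by (intro divide_left_mono) auto
    also have "W j / W jstar = (w j / w jstar) * exp (- (s j - s jstar))"
      by (simp add: W_def exp_diff exp_minus field_simps)
    also have "\<dots> \<le> C * exp (- \<delta>0 * real CARD('m))"
    proof (rule mult_mono)
      show "w j / w jstar \<le> C" using w_ratio j jstar_lt by blast
      have "(s j - s jstar) / real CARD('m) \<ge> \<delta>0" using gap j by blast
      hence "\<delta>0 * real CARD('m) \<le> s j - s jstar" by (simp add: le_divide_eq)
      thus "exp (- (s j - s jstar)) \<le> exp (- \<delta>0 * real CARD('m))" by simp
      show "0 \<le> C" using C_gt1 by simp
      show "0 \<le> exp (- (s j - s jstar))" by simp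
    qed
    finally show ?thesis by (simp add: PJ_eq e_def)
  qed
  have "(\<Sum>j\<in>{j. j < M \<and> j \<noteq> jstar}. PJ j) \<le> real (card {j. j < M \<and> j \<noteq> jstar}) * e"
    by (rule sum_bounded_above) (use each in auto)
  also have "\<dots> \<le> real M * e"
  proof (rule mult_right_mono)
    have "card {j. j < M \<and> j \<noteq> jstar} \<le> card {..<M}" by (rule card_mono) auto
    thus "real (card {j. j < M \<and> j \<noteq> jstar}) \<le> real M" by simp
  qed (rule e_nn)
  finally have part1: "(\<Sum>j\<in>{j. j < M \<and> j \<noteq> jstar}. PJ j) \<le> bound" by (simp add: bound_def e_def mult_ac)
  define J where "J = {j. j < M \<and> j \<noteq> jstar}"
  have part2: "tv_dist (posterior (gm_prior M w mu \<tau>) A \<sigma> ystar) (gauss_measure mpost Spost) \<le> bound"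
  proof -
    define mj where "mj j = mu j + \<tau>\<^sup>2 *\<^sub>R (transpose A *v (Si *v rr j))" for j
    have mpost_eq: "mpost = mj jstar" by (simp add: mpost_def mj_def Si_def rr_def)
    define g where "g v = exp (- (v \<bullet> (H *v v)) / 2)" for v :: "real^'n"
    have g_meas[measurable]: "g \<in> borel_measurable borel" unfolding g_def by measurable
    have gpos: "g v > 0" for v by (simp add: g_def)
    have GP: "det H > 0" "(\<integral>\<^sup>+x. ennreal (g x) \<partial>lborel) = ennreal (sqrt ((2*pi)^CARD('n) / det H))"
      using gauss_pd[OF HL(2) HL(3)] by (auto simp: g_def)
    define G where "G = sqrt ((2*pi)^CARD('n) / det H)"
    have Gpos: "G > 0" using GP(1) by (simp add: G_def)
    have gint: "(\<integral>\<^sup>+x. ennreal (g (x - c)) \<partial>lborel) = ennreal G" for c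
      using nn_integral_translate[of "\<lambda>x. ennreal (g x)" c] GP(2) by (simp add: G_def)
    define K2 where "K2 = 1 / (sqrt ((2 * pi) ^ CARD('n) * (\<tau>\<^sup>2) ^ CARD('n)) * sqrt ((2 * pi) ^ CARD('m) * (\<sigma>\<^sup>2) ^ CARD('m)))"
    have K2pos: "K2 > 0" using sigma_pos tau_pos by (simp add: K2_def)
    define L where "L x = gm_prior M w mu \<tau> x * gauss_density (A *v x) (\<sigma>\<^sup>2 *\<^sub>R mat 1) ystar" for x
    have L_eq: "L x = K2 * (\<Sum>j<M. W j * g (x - mj j))" for x
    proof -
      have "L x = (\<Sum>j<M. w j * (gauss_density (mu j) (\<tau>\<^sup>2 *\<^sub>R mat 1) x * gauss_density (A *v x) (\<sigma>\<^sup>2 *\<^sub>R mat 1) ystar))"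
        unfolding L_def gm_prior_def sum_distrib_right by (simp add: mult_ac)
      also have "\<dots> = (\<Sum>j<M. K2 * (W j * g (x - mj j)))"
      proof (rule sum.cong)
        fix j
        have "gauss_density (mu j) (\<tau>\<^sup>2 *\<^sub>R mat 1) x * gauss_density (A *v x) (\<sigma>\<^sup>2 *\<^sub>R mat 1) ystar
          = K2 * exp (- (rr j \<bullet> (Si *v rr j)) / 2) * g (x - mj j)"
          using lik_factor[OF sigma_pos tau_pos, where A=A and mu="mu j" and x=x and y=ystar, folded Sig_def H_def]
          by (simp add: K2_def g_def mj_def rr_def Si_def)
        thus "w j * (gauss_density (mu j) (\<tau>\<^sup>2 *\<^sub>R mat 1) x * gauss_density (A *v x) (\<sigma>\<^sup>2 *\<^sub>R mat 1) ystar)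
          = K2 * (W j * g (x - mj j))" by (simp add: W_def s_eq mult_ac)
      qed simp
      finally show ?thesis by (simp add: sum_distrib_left)
    qed
    have L_meas[measurable]: "L \<in> borel_measurable borel" unfolding L_eq[abs_def] by measurable
    have L_nn: "L x \<ge> 0" for x unfolding L_eq using K2pos Wpos gpos
      by (intro mult_nonneg_nonneg sum_nonneg) (auto simp: less_imp_le)
    have Lint: "(\<integral>\<^sup>+x. ennreal (L x) \<partial>lborel) = ennreal (K2 * SW * G)"
    proof -
      have "(\<integral>\<^sup>+x. ennreal (L x) \<partial>lborel) = (\<integral>\<^sup>+x. (\<Sum>j<M. ennreal (K2 * W j) * ennreal (g (x - mj j))) \<partial>lborel)"
      proof (rule nn_integral_cong)
        fix x
        have "ennreal (L x) = ennreal (\<Sum>j<M. (K2 * W j) * g (x - mj j))" by (simp add: L_eq sum_distrib_left mult_ac)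
        also have "\<dots> = (\<Sum>j<M. ennreal ((K2 * W j) * g (x - mj j)))"
          using K2pos Wpos gpos by (intro sum_ennreal[symmetric]) (auto simp: less_imp_le)
        also have "\<dots> = (\<Sum>j<M. ennreal (K2 * W j) * ennreal (g (x - mj j)))"
          using K2pos Wpos gpos by (intro sum.cong refl ennreal_mult) (auto simp: less_imp_le)
        finally show "ennreal (L x) = (\<Sum>j<M. ennreal (K2 * W j) * ennreal (g (x - mj j)))" .
      qed
      also have "\<dots> = (\<Sum>j<M. ennreal (K2 * W j) * (\<integral>\<^sup>+x. ennreal (g (x - mj j)) \<partial>lborel))"
        by (subst nn_integral_sum) (auto simp: nn_integral_cmult)
      also have "\<dots> = (\<Sum>j<M. ennreal (K2 * W j * G))"
        using K2pos Wpos Gpos by (intro sum.cong refl) (simp add: gint ennreal_mult less_imp_le)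
      also have "\<dots> = ennreal (\<Sum>j<M. K2 * W j * G)"
        using K2pos Wpos Gpos by (intro sum_ennreal) (auto simp: less_imp_le)
      also have "(\<Sum>j<M. K2 * W j * G) = K2 * SW * G" by (simp add: SW_def sum_distrib_left sum_distrib_right mult_ac)
      finally show ?thesis .
    qed
    have Z: "(\<integral>x. L x \<partial>lborel) = K2 * SW * G"
      using nn_integral_eq_integrable[of L lborel "K2 * SW * G"] Lint L_nn K2pos SWpos Gpos by simp
    define q where "q j x = g (x - mj j) / G" for j x
    have q_meas[measurable]: "(\<lambda>x. q j x) \<in> borel_measurable borel" for j unfolding q_def by measurable
    have q_nn: "q j x \<ge> 0" for j x using gpos Gpos by (simp add: q_def less_imp_le)
    have post_eq: "posterior (gm_prior M w mu \<tau>) A \<sigma> ystar = density lborel (\<lambda>x. ennreal (\<Sum>j<M. PJ j * q j x))"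
    proof -
      have "posterior (gm_prior M w mu \<tau>) A \<sigma> ystar = density lborel (\<lambda>x. ennreal (L x / (K2 * SW * G)))"
        unfolding posterior_def Let_def L_def[symmetric] Z by simp
      also have "(\<lambda>x. ennreal (L x / (K2 * SW * G))) = (\<lambda>x. ennreal (\<Sum>j<M. PJ j * q j x))"
      proof
        fix x
        have "L x / (K2 * SW * G) = (\<Sum>j<M. PJ j * q j x)"
          using K2pos SWpos Gpos by (simp add: L_eq PJ_eq q_def sum_divide_distrib)
        thus "ennreal (L x / (K2 * SW * G)) = ennreal (\<Sum>j<M. PJ j * q j x)" by simp
      qed
      finally show ?thesis .
    qed
    have Q_eq: "gauss_measure mpost Spost = density lborel (q jstar)"
    proof -
      have "gauss_density mpost Spost x = q jstar x" for x
        using GP(1) by (simp add: gauss_density_def HL(4) HL(6) q_def g_def G_def mpost_eq)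
      thus ?thesis by (simp add: gauss_measure_def)
    qed
    define N where "N j = density lborel (\<lambda>x. ennreal (q j x))" for j
    have Nprob: "prob_space (N j)" for j
    proof
      have "emeasure (N j) (space (N j)) = (\<integral>\<^sup>+x. ennreal (q j x) \<partial>lborel)"
        by (simp add: N_def emeasure_density)
      also have "\<dots> = (\<integral>\<^sup>+x. ennreal (g (x - mj j)) * ennreal (1 / G) \<partial>lborel)"
        using gpos Gpos by (intro nn_integral_cong) (simp add: q_def ennreal_mult[symmetric] less_imp_le)
      also have "\<dots> = ennreal G * ennreal (1 / G)" by (simp add: nn_integral_multc gint)
      also have "\<dots> = 1" using Gpos by (simp add: ennreal_mult[symmetric])
      finally show "emeasure (N j) (space (N j)) = 1" .
    qed
    have measB: "measure (posterior (gm_prior M w mu \<tau>) A \<sigma> ystar) B = (\<Sum>j<M. PJ j * measure (N j) B)"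
      and measQ: "measure (gauss_measure mpost Spost) B = measure (N jstar) B"
      if B: "B \<in> sets lborel" for B
    proof -
      have "emeasure (posterior (gm_prior M w mu \<tau>) A \<sigma> ystar) B
          = (\<integral>\<^sup>+x. ennreal (\<Sum>j<M. PJ j * q j x) * indicator B x \<partial>lborel)"
        unfolding post_eq using B by (subst emeasure_density) auto
      also have "\<dots> = (\<integral>\<^sup>+x. (\<Sum>j<M. ennreal (PJ j) * (ennreal (q j x) * indicator B x)) \<partial>lborel)"
      proof (rule nn_integral_cong)
        fix x
        have "ennreal (\<Sum>j<M. PJ j * q j x) = (\<Sum>j<M. ennreal (PJ j * q j x))"
          using PJ_nn q_nn by (intro sum_ennreal[symmetric]) auto
        also have "\<dots> = (\<Sum>j<M. ennreal (PJ j) * ennreal (q j x))"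
          using PJ_nn q_nn by (intro sum.cong refl ennreal_mult) auto
        finally show "ennreal (\<Sum>j<M. PJ j * q j x) * indicator B x = (\<Sum>j<M. ennreal (PJ j) * (ennreal (q j x) * indicator B x))"
          by (simp only: sum_distrib_right mult.assoc)
      qed
      also have "\<dots> = (\<Sum>j<M. ennreal (PJ j) * emeasure (N j) B)"
        using B by (subst nn_integral_sum) (auto simp: nn_integral_cmult N_def emeasure_density)
      also have "\<dots> = (\<Sum>j<M. ennreal (PJ j) * ennreal (measure (N j) B))"
        by (simp add: finite_measure.emeasure_eq_measure[OF prob_space.axioms(1)[OF Nprob]])
      also have "\<dots> = ennreal (\<Sum>j<M. PJ j * measure (N j) B)"
        using PJ_nn by (subst sum_ennreal[symmetric]) (auto intro!: sum.cong simp: ennreal_mult)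
      finally have E: "emeasure (posterior (gm_prior M w mu \<tau>) A \<sigma> ystar) B = ennreal (\<Sum>j<M. PJ j * measure (N j) B)" .
      have nn: "0 \<le> (\<Sum>j<M. PJ j * measure (N j) B)"
        by (intro sum_nonneg mult_nonneg_nonneg) (auto simp: PJ_nn)
      show "measure (posterior (gm_prior M w mu \<tau>) A \<sigma> ystar) B = (\<Sum>j<M. PJ j * measure (N j) B)"
        using E nn by (simp add: measure_def[of "posterior (gm_prior M w mu \<tau>) A \<sigma> ystar"])
      show "measure (gauss_measure mpost Spost) B = measure (N jstar) B"
        by (simp add: Q_eq N_def)
    qed
    have bnd: "\<bar>measure (posterior (gm_prior M w mu \<tau>) A \<sigma> ystar) B - measure (gauss_measure mpost Spost) B\<bar> \<le> bound"
      if B: "B \<in> sets (posterior (gm_prior M w mu \<tau>) A \<sigma> ystar)" for B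
    proof -
      have Bl: "B \<in> sets lborel" using B by (simp add: post_eq)
      define nu where "nu j = measure (N j) B" for j
      have nu01: "0 \<le> nu j" "nu j \<le> 1" for j
        unfolding nu_def using prob_space.prob_le_1[OF Nprob] by auto
      have MJ: "{..<M} = insert jstar J" "jstar \<notin> J" "finite J" using jstar_lt by (auto simp: J_def)
      have "(\<Sum>j<M. PJ j * nu j) - nu jstar = (\<Sum>j<M. PJ j * nu j) - (\<Sum>j<M. PJ j) * nu jstar"
        by (simp add: PJ_sum)
      also have "\<dots> = (\<Sum>j\<in>J. PJ j * (nu j - nu jstar))"
        unfolding MJ(1) using MJ(2,3) by (simp add: sum_distrib_right algebra_simps sum_subtractf sum_distrib_left)
      finally have eq: "(\<Sum>j<M. PJ j * nu j) - nu jstar = (\<Sum>j\<in>J. PJ j * (nu j - nu jstar))" .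
      have "\<bar>\<Sum>j\<in>J. PJ j * (nu j - nu jstar)\<bar> \<le> (\<Sum>j\<in>J. \<bar>PJ j * (nu j - nu jstar)\<bar>)" by (rule sum_abs)
      also have "\<dots> \<le> (\<Sum>j\<in>J. PJ j)"
      proof (rule sum_mono)
        fix j assume "j \<in> J"
        hence "PJ j \<ge> 0" using PJ_nn by (simp add: J_def)
        moreover have "\<bar>nu j - nu jstar\<bar> \<le> 1" using nu01[of j] nu01[of jstar] by linarith
        ultimately show "\<bar>PJ j * (nu j - nu jstar)\<bar> \<le> PJ j" by (simp add: abs_mult mult_left_le)
      qed
      also have "\<dots> \<le> bound" using part1 by (simp add: J_def)
      finally show ?thesis using measB[OF Bl] measQ[OF Bl] eq by (simp add: nu_def)
    qed
    show ?thesis unfolding tv_dist_def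
      by (rule cSUP_least) (use bnd in auto)
  qed
  show ?thesis using part1 part2 by (simp add: bound_def)
qed

end
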